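(* Let $F=F(A,p,u,x)$ be a $C^{2}$ function of $(A,p,u,x)\in\mathcal{S}^N\times\mathbb{R}^N\times\mathbb{R}\times\Omega$, $\Omega\subset\mathbb{R}^N=\mathbb{R}^{N'}\times\mathbb{R}^{N''}$. The condition $$\text{for each fixed }(p',x''),\ (a,b,c,p'',u,x')\mapsto F\left(\begin{pmatrix} a^{-1} & a^{-1}b\\ (a^{-1}b)^T & c+b^Ta^{-1}b\end{pmatrix},p',p'',u,x',x''\right)\text{ is locally convex}$$ is equivalent to the following: at every point $(A,p,u,x)$ with $A=\begin{pmatrix} a& b\\ b^T& c\end{pmatrix}$, $a$ positive definite, and for every $\widetilde X=((X_{ab}),(X_\alpha),Y,(Z_i))\in\mathcal{S}^N\times\mathbb{R}^{N''}\times\mathbb{R}\times\mathbb{R}^{N'}$, $$\begin{aligned} &\sum_{a,b,c,d=1}^N F^{ab,cd}X_{ab}X_{cd}+2\sum_{a,b=1}^N\sum_{k,l=1}^{N'}F^{ab}a^{kl}X_{ka}X_{lb}+2\sum_{a,b=1}^N\sum_{\alpha=N'+1}^N F^{ab,p_\alpha}X_{ab}X_\alpha\\ &+2\sum_{a,b=1}^N F^{ab,u}X_{ab}Y+2\sum_{a,b=1}^N\sum_{i=1}^{N'}F^{ab,x_i}X_{ab}Z_i+\sum_{\alpha,\beta=N'+1}^N F^{p_\alpha,p_\beta}X_\alpha X_\beta+2\sum_{\alpha=N'+1}^N F^{p_\alpha,u}X_\alpha Y\\ &+2\sum_{\alpha=N'+1}^N\sum_{i=1}^{N'}F^{p_\alpha,x_i}X_\alpha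 Z_i+F^{u,u}Y^2+2\sum_{i=1}^{N'}F^{u,x_i}YZ_i+\sum_{i,j=1}^{N'}F^{x_i,x_j}Z_iZ_j\ \ge 0, \end{aligned}$$ where all derivatives of $F$ are evaluated at $(A,p,u,x)$ and $(a^{kl})=a^{-1}$.
   Context: $N=N'+N''$; $x=(x',x'')$, $p=(p',p'')$ with primed parts in $\mathbb{R}^{N'}$ and double-primed parts in $\mathbb{R}^{N''}$; the components $X_\alpha$ of $\widetilde X$ are indexed by $\alpha=N'+1,\dots,N$ and $Z_i$ by $i=1,\dots,N'$. $\mathcal{S}^n$ is the set of real symmetric $n\times n$ matrices; $A\in\mathcal{S}^N$ is written $\begin{pmatrix} a& b\\ b^T& c\end{pmatrix}$ with $a\in\mathcal{S}^{N'}$, $b\in\mathbb{R}^{N'\times N''}$, $c\in\mathcal{S}^{N''}$. Notation: $F^{ab}=\partial F/\partial A_{ab}$, $F^{ab,cd}=\partial^2F/\partial A_{ab}\partial A_{cd}$, $F^{ab,p_c}=\partial^2F/\partial A_{ab}\partial p_c$, $F^{ab,u}=\partial^2F/\partial A_{ab}\partial u$, $F^{ab,x_i}=\partial^2F/\partial A_{ab}\partial x_i$, $F^{p_a,p_b}=\partial^2F/\partial p_a\partial p_b$, $F^{p_a,u}$, $F^{p_a,x_i}$, $F^{u,u}$, $F^{u,x_i}$, $F^{x_i,x_j}$ the corresponding second partial derivatives. *)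

theory Defs
  imports "HOL-Analysis.Analysis"
begin

type_synonym ('n1,'n2) pt =
  "(real^('n1 + 'n2)^('n1 + 'n2)) \<times> (real^('n1 + 'n2)) \<times> real \<times> (real^('n1 + 'n2))"

text \<open>Index set of R^N = R^N' x R^N'': the sum type 'n1 + 'n2
  (Inl i : the first N' coordinates, Inr alpha : the last N'' coordinates).\<close>

definition vjoin :: "real^'n1::finite \<Rightarrow> real^'n2 \<Rightarrow> real^('n1 + 'n2)" where
  "vjoin x1 x2 = (\<chi> r. case r of Inl i \<Rightarrow> x1 $ i | Inr j \<Rightarrow> x2 $ j)"

definition mkblk :: "real^'n1::finite^'n1 \<Rightarrow> real^'n2::finite^'n1 \<Rightarrow> real^'n2^'n2
    \<Rightarrow> real^('n1 + 'n2)^('n1 + 'n2)" where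
  "mkblk P Q R = (\<chi> r s. case r of
       Inl i \<Rightarrow> (case s of Inl j \<Rightarrow> P $ i $ j | Inr \<beta> \<Rightarrow> Q $ i $ \<beta>)
     | Inr \<alpha> \<Rightarrow> (case s of Inl j \<Rightarrow> Q $ j $ \<alpha> | Inr \<beta> \<Rightarrow> R $ \<alpha> $ \<beta>))"

definition ul_block :: "real^('n1::finite + 'n2::finite)^('n1 + 'n2) \<Rightarrow> real^'n1^'n1" where
  "ul_block A = (\<chi> i j. A $ Inl i $ Inl j)"

definition symmetric_mat :: "real^'n::finite^'n \<Rightarrow> bool" where
  "symmetric_mat A \<longleftrightarrow> transpose A = A"

definition pos_def :: "real^'n::finite^'n \<Rightarrow> bool" where
  "pos_def a \<longleftrightarrow> symmetric_mat a \<and> (\<forall>v. v \<noteq> 0 \<longrightarrow> v \<bullet> (a *v v) > 0)"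

text \<open>Symmetrisation; F is only given on symmetric matrices, so smoothness of F on
  S^N x R^N x R x Omega is expressed as smoothness of F composed with the linear
  projection onto S^N.\<close>
definition symm :: "real^'n::finite^'n \<Rightarrow> real^'n^'n" where
  "symm A = (1/2) *\<^sub>R (A + transpose A)"

definition sym_ext :: "(real^'n::finite^'n \<Rightarrow> real^'n \<Rightarrow> real \<Rightarrow> real^'n \<Rightarrow> real)
    \<Rightarrow> ((real^'n^'n) \<times> (real^'n) \<times> real \<times> (real^'n)) \<Rightarrow> real" where
  "sym_ext F = (\<lambda>(A, p, u, x). F (symm A) p u x)"

definition C2_derivs :: "('v::real_normed_vector \<Rightarrow> real) \<Rightarrow> ('v \<Rightarrow> 'v \<Rightarrow> real)
    \<Rightarrow> ('v \<Rightarrow> 'v \<Rightarrow> 'v \<Rightarrow> real) \<Rightarrow> 'v set \<Rightarrow> bool" where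
  "C2_derivs f Df D2f S \<longleftrightarrow>
     open S \<and>
     (\<forall>z\<in>S. (f has_derivative Df z) (at z)) \<and>
     (\<forall>z\<in>S. \<forall>h. ((\<lambda>w. Df w h) has_derivative D2f z h) (at z)) \<and>
     (\<forall>h k. continuous_on S (\<lambda>z. D2f z h k))"

definition locally_convex_on :: "'v::real_normed_vector set \<Rightarrow> ('v \<Rightarrow> real) \<Rightarrow> bool" where
  "locally_convex_on D g \<longleftrightarrow> (\<forall>w\<in>D. \<exists>e>0. convex_on (ball w e \<inter> D) g)"

definition Gtrans :: "(real^('n1::finite + 'n2::finite)^('n1 + 'n2) \<Rightarrow> real^('n1 + 'n2) \<Rightarrow> real
      \<Rightarrow> real^('n1 + 'n2) \<Rightarrow> real) \<Rightarrow> real^'n1 \<Rightarrow> real^'n2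
    \<Rightarrow> ((real^'n1^'n1) \<times> (real^'n2^'n1) \<times> (real^'n2^'n2) \<times> (real^'n2) \<times> real \<times> (real^'n1)) \<Rightarrow> real" where
  "Gtrans F p1 x2 = (\<lambda>(a, b, c, p2, u, x1).
     F (mkblk (matrix_inv a) (matrix_inv a ** b) (c + transpose b ** matrix_inv a ** b))
       (vjoin p1 p2) u (vjoin x1 x2))"

definition Gdom :: "(real^('n1::finite + 'n2::finite)) set \<Rightarrow> real^'n2
    \<Rightarrow> ((real^'n1^'n1) \<times> (real^'n2^'n1) \<times> (real^'n2^'n2) \<times> (real^'n2) \<times> real \<times> (real^'n1)) set" where
  "Gdom \<Omega> x2 = {(a, b, c, p2, u, x1). pos_def a \<and> symmetric_mat c \<and> vjoin x1 x2 \<in> \<Omega>}"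

text \<open>The Hessian part (all terms with second derivatives of F)
  is the second derivative of F in direction h = (X, (0,X''), Y, (Z,0)); the remaining
  term 2 sum F^{ab} a^{kl} X_{ka} X_{lb} is 2 DF[M] with M_{ab} = sum_{k,l} X_{ka} a^{kl} X_{lb}.\<close>
definition quad_form :: "(('n1::finite,'n2::finite) pt \<Rightarrow> ('n1,'n2) pt \<Rightarrow> real)
    \<Rightarrow> (('n1,'n2) pt \<Rightarrow> ('n1,'n2) pt \<Rightarrow> ('n1,'n2) pt \<Rightarrow> real)
    \<Rightarrow> ('n1,'n2) pt \<Rightarrow> real^('n1 + 'n2)^('n1 + 'n2) \<Rightarrow> real^'n2 \<Rightarrow> real \<Rightarrow> real^'n1 \<Rightarrow> real" where
  "quad_form DF D2F z X X2 Y Z =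
     (let (A, p, u, x) = z;
          ainv = matrix_inv (ul_block A);
          h = (X, vjoin 0 X2, Y, vjoin Z 0);
          M = (\<chi> a b. \<Sum>k\<in>UNIV. \<Sum>l\<in>UNIV. X $ Inl k $ a * ainv $ k $ l * X $ Inl l $ b)
      in D2F z h h + 2 * DF z (M, 0, 0, 0))"

end

theory Submission
  imports Defs
begin


lemma mm_ldiff: "(A::real^'n^'m) ** (B - C) = A ** B - A ** C"
  by (simp add: matrix_matrix_mult_def vec_eq_iff sum_subtractf right_diff_distrib)
lemma mm_rdiff: "((B::real^'n^'m) - C) ** A = B ** A - C ** A"
  by (simp add: matrix_matrix_mult_def vec_eq_iff sum_subtractf left_diff_distrib)
lemma mm_radd: "((B::real^'n^'m) + C) ** A = B ** A + C ** A"
  by (simp add: matrix_matrix_mult_def vec_eq_iff sum.distrib distrib_right)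
lemma mm_lneg: "(- (B::real^'n^'m)) ** A = - (B ** A)"
  by (simp add: matrix_matrix_mult_def vec_eq_iff sum_negf)
lemma mm_rneg: "(B::real^'n^'m) ** (- A) = - (B ** A)"
  by (simp add: matrix_matrix_mult_def vec_eq_iff sum_negf)
lemma mm_lscale: "(k *\<^sub>R (B::real^'n^'m)) ** A = k *\<^sub>R (B ** A)"
  by (simp add: scalar_matrix_assoc)
lemma mm_rscale: "(B::real^'n^'m) ** (k *\<^sub>R A) = k *\<^sub>R (B ** A)"
  by (simp add: matrix_matrix_mult_def vec_eq_iff sum_distrib_left mult_ac)
lemma tr_add: "transpose ((A::real^'n^'m) + B) = transpose A + transpose B"
  by (simp add: transpose_def vec_eq_iff)
lemma tr_diff: "transpose ((A::real^'n^'m) - B) = transpose A - transpose B"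
  by (simp add: transpose_def vec_eq_iff)
lemma tr_neg: "transpose (- (A::real^'n^'m)) = - transpose A"
  by (simp add: transpose_def vec_eq_iff)
lemma tr_zero: "transpose (0::real^'n^'m) = 0"
  by (simp add: transpose_def vec_eq_iff)

lemmas mm_simps = mm_ldiff mm_rdiff mm_radd matrix_add_ldistrib mm_lneg mm_rneg mm_lscale mm_rscale
  tr_add tr_diff tr_neg tr_zero transpose_scalar matrix_transpose_mul

lemma bilinear_mm: "bilinear ((**) :: real^'n::finite^'m::finite \<Rightarrow> real^'p::finite^'n \<Rightarrow> real^'p^'m)"
  unfolding bilinear_def by (auto simp: linear_iff mm_simps)

lemma bb_mm: "bounded_bilinear ((**) :: real^'n::finite^'m::finite \<Rightarrow> real^'p::finite^'n \<Rightarrow> real^'p^'m)"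
  using bilinear_conv_bounded_bilinear bilinear_mm by blast

lemma bl_transpose: "bounded_linear (transpose :: real^'n::finite^'m::finite \<Rightarrow> real^'m^'n)"
  by (simp add: linear_conv_bounded_linear[symmetric] linear_iff tr_add transpose_scalar)

lemma vd_mm:
  fixes f :: "real \<Rightarrow> real^'n::finite^'m::finite" and g :: "real \<Rightarrow> real^'p::finite^'n"
  assumes "(f has_vector_derivative f') (at t)" "(g has_vector_derivative g') (at t)"
  shows "((\<lambda>s. f s ** g s) has_vector_derivative (f t ** g' + f' ** g t)) (at t)"
  using bounded_bilinear.has_vector_derivative[OF bb_mm assms] .

lemma vd_tr:
  fixes f :: "real \<Rightarrow> real^'n::finite^'m::finite"
  assumes "(f has_vector_derivative f') (at t)"
  shows "((\<lambda>s. transpose (f s)) has_vector_derivative (transpose f')) (at t)"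
  using bounded_linear.has_vector_derivative[OF bl_transpose assms] .

lemma inv_props:
  fixes a :: "real^'n::finite^'n"
  assumes "invertible a"
  shows "a ** matrix_inv a = mat 1" "matrix_inv a ** a = mat 1"
proof -
  obtain a' where "a ** a' = mat 1 \<and> a' ** a = mat 1" using assms unfolding invertible_def by blast
  then have "a ** matrix_inv a = mat 1 \<and> matrix_inv a ** a = mat 1"
    unfolding matrix_inv_def by (rule someI)
  then show "a ** matrix_inv a = mat 1" "matrix_inv a ** a = mat 1" by auto
qed

lemma inv_unique:
  fixes a :: "real^'n::finite^'n"
  assumes "a ** b = mat 1"
  shows "matrix_inv a = b" "invertible a"
proof -
  have ba: "b ** a = mat 1" using assms matrix_left_right_inverse by blast
  show inv: "invertible a" unfolding invertible_def using assms ba by blast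
  have "matrix_inv a = matrix_inv a ** (a ** b)" by (simp add: assms)
  also have "\<dots> = b" by (simp add: matrix_mul_assoc inv_props[OF inv])
  finally show "matrix_inv a = b" .
qed

lemma inv_inv: "invertible (a::real^'n::finite^'n) \<Longrightarrow> matrix_inv (matrix_inv a) = a"
  by (meson inv_props(2) inv_unique(1))

lemma inv_invertible: "invertible (a::real^'n::finite^'n) \<Longrightarrow> invertible (matrix_inv a)"
  by (meson inv_props(2) inv_unique(2))

lemma inv_sym:
  fixes a :: "real^'n::finite^'n"
  assumes "invertible a" "transpose a = a"
  shows "transpose (matrix_inv a) = matrix_inv a"
proof -
  have "transpose (matrix_inv a) ** a = mat 1"
    using inv_props(1)[OF assms(1)] by (metis assms(2) matrix_transpose_mul transpose_mat)
  then have "a ** transpose (matrix_inv a) = mat 1" using matrix_left_right_inverse by blast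
  then show ?thesis using inv_unique(1) by metis
qed

lemma posdef_invertible:
  fixes a :: "real^'n::finite^'n"
  assumes "pos_def a" shows "invertible a"
proof -
  have "\<forall>x. a *v x = 0 \<longrightarrow> x = 0"
    using assms unfolding pos_def_def by (metis inner_zero_right less_irrefl)
  then show ?thesis using matrix_left_invertible_ker invertible_left_inverse by blast
qed

lemma posdef_inv:
  fixes a :: "real^'n::finite^'n"
  assumes "pos_def a" shows "pos_def (matrix_inv a)"
proof -
  have inv: "invertible a" by (rule posdef_invertible[OF assms])
  have sym: "transpose a = a" using assms unfolding pos_def_def symmetric_mat_def by auto
  have "v \<bullet> (matrix_inv a *v v) > 0" if "v \<noteq> 0" for v
  proof -
    define w where "w = matrix_inv a *v v"
    have v: "v = a *v w" unfolding w_def by (simp add: matrix_vector_mul_assoc inv_props[OF inv])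
    have "w \<noteq> 0" using v that by auto
    then have "w \<bullet> (a *v w) > 0" using assms unfolding pos_def_def by auto
    moreover have "matrix_inv a *v (a *v w) = w" by (simp add: matrix_vector_mul_assoc inv_props[OF inv])
    ultimately show ?thesis using v by (simp add: inner_commute)
  qed
  then show ?thesis unfolding pos_def_def symmetric_mat_def using inv_sym[OF inv sym] by auto
qed



lemma carat_vd:
  fixes f \<phi> :: "real \<Rightarrow> 'a::real_normed_vector"
  assumes ev: "\<forall>\<^sub>F s in at t. f s = f t + (s - t) *\<^sub>R \<phi> s"
    and cont: "(\<phi> \<longlongrightarrow> \<phi> t) (at t)"
  shows "(f has_vector_derivative \<phi> t) (at t)"
  unfolding has_vector_derivative_def has_derivative_iff_norm
proof
  show "bounded_linear (\<lambda>h. h *\<^sub>R \<phi> t)" by (rule bounded_linear_scaleR_left)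
  have "((\<lambda>s. norm (\<phi> s - \<phi> t)) \<longlongrightarrow> 0) (at t)"
    using cont by (simp add: tendsto_norm_zero_iff LIM_zero)
  moreover have "\<forall>\<^sub>F s in at t. norm (\<phi> s - \<phi> t) = norm (f s - f t - (s - t) *\<^sub>R \<phi> t) / norm (s - t)"
  proof -
    have ne: "\<forall>\<^sub>F s in at t. s \<noteq> t" by (simp add: eventually_at_filter)
    show ?thesis using ev ne
    proof (eventually_elim)
      case (elim s)
      then have "f s - f t - (s - t) *\<^sub>R \<phi> t = (s - t) *\<^sub>R (\<phi> s - \<phi> t)"
        by (simp add: scaleR_diff_right)
      then show ?case using elim by simp
    qed
  qed
  ultimately show "((\<lambda>s. norm (f s - f t - (s - t) *\<^sub>R \<phi> t) / norm (s - t)) \<longlongrightarrow> 0) (at t)"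
    using Lim_transform_eventually by fastforce
qed

lemma inv_diff_id:
  fixes a b :: "real^'n::finite^'n"
  assumes "invertible a" "invertible b"
  shows "matrix_inv b - matrix_inv a = matrix_inv b ** (a - b) ** matrix_inv a"
  by (simp add: mm_simps matrix_mul_assoc[symmetric] inv_props[OF assms(1)])
     (simp add: matrix_mul_assoc inv_props[OF assms(2)])

lemma inv_line:
  fixes a \<alpha> :: "real^'n::finite^'n"
  assumes inv: "invertible (a + t *\<^sub>R \<alpha>)"
  defines "B \<equiv> matrix_inv (a + t *\<^sub>R \<alpha>)"
  shows "\<forall>\<^sub>F s in at t. invertible (a + s *\<^sub>R \<alpha>)"
    and "((\<lambda>s. matrix_inv (a + s *\<^sub>R \<alpha>)) \<longlongrightarrow> B) (at t)"
    and "((\<lambda>s. matrix_inv (a + s *\<^sub>R \<alpha>)) has_vector_derivative (- (B ** \<alpha> ** B))) (at t)"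
proof -
  obtain K where K: "K > 0" "\<And>v. norm ((B ** \<alpha>) *v v) \<le> norm v * K"
    using bounded_linear.pos_bounded[OF matrix_vector_mul_bounded_linear[of "B ** \<alpha>"]] by blast
  have invs: "invertible (a + s *\<^sub>R \<alpha>)" if st: "\<bar>s - t\<bar> < 1 / K" for s
  proof -
    have "v = 0" if v: "(a + s *\<^sub>R \<alpha>) *v v = 0" for v
    proof (rule ccontr)
      assume "v \<noteq> 0"
      have "(a + t *\<^sub>R \<alpha>) *v v = - ((s - t) *\<^sub>R (\<alpha> *v v))"
        using v by (simp add: matrix_vector_mult_def vec_eq_iff algebra_simps sum.distrib sum_subtractf sum_distrib_left)
      moreover have "B *v (- ((s - t) *\<^sub>R (\<alpha> *v v))) = - ((s - t) *\<^sub>R ((B ** \<alpha>) *v v))"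
        using linear_neg[OF bounded_linear.linear[OF matrix_vector_mul_bounded_linear[of B]]]
          linear_scale[OF bounded_linear.linear[OF matrix_vector_mul_bounded_linear[of B]]]
        by (simp add: matrix_vector_mul_assoc)
      ultimately have "B *v ((a + t *\<^sub>R \<alpha>) *v v) = - ((s - t) *\<^sub>R ((B ** \<alpha>) *v v))" by simp
      then have "v = - ((s - t) *\<^sub>R ((B ** \<alpha>) *v v))"
        by (simp add: matrix_vector_mul_assoc B_def inv_props[OF inv])
      then have "norm v = \<bar>s - t\<bar> * norm ((B ** \<alpha>) *v v)" by (metis norm_minus_cancel norm_scaleR)
      also have "\<dots> \<le> \<bar>s - t\<bar> * (norm v * K)" using K(2) by (simp add: mult_left_mono)
      also have "\<dots> < 1 / K * (norm v * K)"
        using st \<open>v \<noteq> 0\<close> K(1) by (intro mult_strict_right_mono) auto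
      also have "\<dots> = norm v" using K(1) by simp
      finally show False by simp
    qed
    then show ?thesis using matrix_left_invertible_ker invertible_left_inverse by blast
  qed
  have evI: "\<forall>\<^sub>F s in at t. P s" if "\<exists>d>0. \<forall>s. \<bar>s - t\<bar> < d \<longrightarrow> P s" for P
    using that unfolding eventually_at by (auto simp: dist_real_def)
  show ev1: "\<forall>\<^sub>F s in at t. invertible (a + s *\<^sub>R \<alpha>)"
    by (rule evI) (use K(1) invs in \<open>auto intro!: exI[of _ "1/K"]\<close>)
  have id: "matrix_inv (a + s *\<^sub>R \<alpha>) = B + (s - t) *\<^sub>R (- (matrix_inv (a + s *\<^sub>R \<alpha>) ** (\<alpha> ** B)))"
    if "invertible (a + s *\<^sub>R \<alpha>)" for s
  proof -
    have "matrix_inv (a + s *\<^sub>R \<alpha>) - B = matrix_inv (a + s *\<^sub>R \<alpha>) ** ((a + t *\<^sub>R \<alpha>) - (a + s *\<^sub>R \<alpha>)) ** B"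
      unfolding B_def by (rule inv_diff_id[OF inv that])
    also have "(a + t *\<^sub>R \<alpha>) - (a + s *\<^sub>R \<alpha>) = - ((s - t) *\<^sub>R \<alpha>)" by (simp add: algebra_simps)
    finally show ?thesis by (simp add: mm_simps matrix_mul_assoc algebra_simps)
  qed
  obtain K2 where K2: "K2 > 0" "\<And>(x::real^'n^'n) (y::real^'n^'n). norm (x ** y) \<le> norm x * norm y * K2"
    using bounded_bilinear.pos_bounded[OF bb_mm] by blast
  define L where "L = norm (\<alpha> ** B) * K2 + 1"
  have L: "L > 0" unfolding L_def using K2 by (simp add: add_nonneg_pos)
  have bnd: "norm (matrix_inv (a + s *\<^sub>R \<alpha>) - B) \<le> \<bar>s - t\<bar> * (2 * norm B * L)"
    if "\<bar>s - t\<bar> < min (1/K) (1/(2*L))" for s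
  proof -
    let ?Bs = "matrix_inv (a + s *\<^sub>R \<alpha>)"
    have i: "invertible (a + s *\<^sub>R \<alpha>)" using invs that by auto
    have n1: "norm (?Bs - B) \<le> \<bar>s - t\<bar> * (norm ?Bs * L)"
    proof -
      have "norm (?Bs - B) = \<bar>s - t\<bar> * norm (?Bs ** (\<alpha> ** B))"
        using id[OF i] by (metis add_diff_cancel_left' norm_minus_cancel norm_scaleR)
      also have "\<dots> \<le> \<bar>s - t\<bar> * (norm ?Bs * L)"
      proof (rule mult_left_mono)
        have "norm (?Bs ** (\<alpha> ** B)) \<le> norm ?Bs * (norm (\<alpha> ** B) * K2)"
          using K2(2)[of ?Bs "\<alpha> ** B"] by (simp add: mult.assoc)
        also have "\<dots> \<le> norm ?Bs * L" unfolding L_def by (rule mult_left_mono) auto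
        finally show "norm (?Bs ** (\<alpha> ** B)) \<le> norm ?Bs * L" .
      qed simp
      finally show ?thesis .
    qed
    have "\<bar>s - t\<bar> * L \<le> 1/2" using that L by (simp add: field_simps)
    then have "norm ?Bs * (\<bar>s - t\<bar> * L) \<le> norm ?Bs * (1/2)"
      by (rule mult_left_mono) simp
    then have "\<bar>s - t\<bar> * (norm ?Bs * L) \<le> norm ?Bs / 2" by (simp add: ac_simps)
    moreover have "norm ?Bs \<le> norm B + norm (?Bs - B)" using norm_triangle_ineq[of B "?Bs - B"] by simp
    ultimately have "norm ?Bs \<le> 2 * norm B" using n1 by linarith
    then have "\<bar>s - t\<bar> * (norm ?Bs * L) \<le> \<bar>s - t\<bar> * (2 * norm B * L)"
      using L by (intro mult_left_mono mult_right_mono) auto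
    then show ?thesis using n1 by linarith
  qed
  have "((\<lambda>s. matrix_inv (a + s *\<^sub>R \<alpha>) - B) \<longlongrightarrow> 0) (at t)"
  proof (rule Lim_null_comparison)
    show "\<forall>\<^sub>F s in at t. norm (matrix_inv (a + s *\<^sub>R \<alpha>) - B) \<le> \<bar>s - t\<bar> * (2 * norm B * L)"
      by (rule evI) (use K(1) L bnd in \<open>auto intro!: exI[of _ "min (1/K) (1/(2*L))"]\<close>)
    have "((\<lambda>s. \<bar>s - t\<bar>) \<longlongrightarrow> \<bar>t - t\<bar>) (at t)" by (intro tendsto_intros)
    then show "((\<lambda>s. \<bar>s - t\<bar> * (2 * norm B * L)) \<longlongrightarrow> 0) (at t)"
      using tendsto_mult_left_zero by fastforce
  qed
  then show lim: "((\<lambda>s. matrix_inv (a + s *\<^sub>R \<alpha>)) \<longlongrightarrow> B) (at t)"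
    by (simp add: LIM_zero_iff)
  have "((\<lambda>s. matrix_inv (a + s *\<^sub>R \<alpha>)) has_vector_derivative (\<lambda>s. - (matrix_inv (a + s *\<^sub>R \<alpha>) ** (\<alpha> ** B))) t) (at t)"
  proof (rule carat_vd)
    show "\<forall>\<^sub>F s in at t. matrix_inv (a + s *\<^sub>R \<alpha>) = matrix_inv (a + t *\<^sub>R \<alpha>) + (s - t) *\<^sub>R - (matrix_inv (a + s *\<^sub>R \<alpha>) ** (\<alpha> ** B))"
      using ev1 by eventually_elim (simp only: B_def[symmetric], rule id)
    show "((\<lambda>s. - (matrix_inv (a + s *\<^sub>R \<alpha>) ** (\<alpha> ** B))) \<longlongrightarrow> - (matrix_inv (a + t *\<^sub>R \<alpha>) ** (\<alpha> ** B))) (at t)"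
      by (simp only: B_def[symmetric]) (intro tendsto_minus bounded_bilinear.tendsto[OF bb_mm] lim tendsto_const)
  qed
  then show "((\<lambda>s. matrix_inv (a + s *\<^sub>R \<alpha>)) has_vector_derivative (- (B ** \<alpha> ** B))) (at t)"
    by (simp add: matrix_mul_assoc B_def)
qed



definition rowblk :: "real^'n1::finite^'n1 \<Rightarrow> real^'n2::finite^'n1 \<Rightarrow> real^('n1 + 'n2)^'n1" where
  "rowblk U V = (\<chi> k r. case r of Inl i \<Rightarrow> U $ k $ i | Inr j \<Rightarrow> V $ k $ j)"

lemma mkblk_nth:
  "mkblk P Q R $ Inl i $ Inl j = P $ i $ j"
  "mkblk P Q R $ Inl i $ Inr \<beta> = Q $ i $ \<beta>"
  "mkblk P Q R $ Inr \<alpha> $ Inl j = Q $ j $ \<alpha>"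
  "mkblk P Q R $ Inr \<alpha> $ Inr \<beta> = R $ \<alpha> $ \<beta>"
  by (simp_all add: mkblk_def)

lemma rowblk_nth: "rowblk U V $ k $ Inl i = U $ k $ i" "rowblk U V $ k $ Inr j = V $ k $ j"
  by (simp_all add: rowblk_def)

lemma sum_sumtype: "(\<Sum>r\<in>(UNIV::('a::finite + 'b::finite) set). f r) = (\<Sum>i\<in>UNIV. f (Inl i)) + (\<Sum>j\<in>UNIV. f (Inr j))"
  by (subst UNIV_Plus_UNIV[symmetric], subst sum.Plus) (auto simp: o_def)

lemma vec_sumtype_eq: "(x::'a^('n1::finite + 'n2::finite)) = y \<longleftrightarrow> (\<forall>i. x $ Inl i = y $ Inl i) \<and> (\<forall>j. x $ Inr j = y $ Inr j)"
  by (simp add: vec_eq_iff split_sum_all)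

lemma mkblk_eq_iff: "A = mkblk P Q R \<longleftrightarrow>
   (\<forall>i j. A $ Inl i $ Inl j = P $ i $ j) \<and> (\<forall>i j. A $ Inl i $ Inr j = Q $ i $ j) \<and>
   (\<forall>i j. A $ Inr i $ Inl j = Q $ j $ i) \<and> (\<forall>i j. A $ Inr i $ Inr j = R $ i $ j)"
  by (auto simp: vec_sumtype_eq mkblk_nth)

lemma mkblk_add: "mkblk P Q R + mkblk P' Q' R' = mkblk (P + P') (Q + Q') (R + R')"
  by (simp add: mkblk_eq_iff mkblk_nth)
lemma mkblk_scale: "k *\<^sub>R mkblk P Q R = mkblk (k *\<^sub>R P) (k *\<^sub>R Q) (k *\<^sub>R R)"
  by (simp add: mkblk_eq_iff mkblk_nth)
lemma mkblk_zero: "mkblk 0 0 0 = 0"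
  by (simp add: vec_eq_iff split_sum_all mkblk_nth)

lemma bl_mkblk: "bounded_linear (\<lambda>(P::real^'n1::finite^'n1, Q::real^'n2::finite^'n1, R::real^'n2^'n2). mkblk P Q R)"
  by (simp add: linear_conv_bounded_linear[symmetric] linear_iff mkblk_add mkblk_scale split: prod.splits)

lemma vd_mkblk:
  assumes "(P has_vector_derivative P') (at t)" "(Q has_vector_derivative Q') (at t)" "(R has_vector_derivative R') (at t)"
  shows "((\<lambda>s. mkblk (P s) (Q s) (R s)) has_vector_derivative mkblk P' Q' R') (at t)"
  using bounded_linear.has_vector_derivative[OF bl_mkblk has_vector_derivative_Pair[OF assms(1) has_vector_derivative_Pair[OF assms(2,3)]]]
  by simp

lemma transpose_mkblk: "transpose (mkblk P Q R) = mkblk (transpose P) Q (transpose R)"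
  by (simp add: mkblk_eq_iff mkblk_nth transpose_def)

lemma ul_mkblk: "ul_block (mkblk P Q R) = P"
  by (simp add: ul_block_def mkblk_nth vec_eq_iff)

lemma top_mkblk: "(\<chi> k r. mkblk P Q R $ Inl k $ r) = rowblk P Q"
  by (simp add: vec_eq_iff split_sum_all mkblk_nth rowblk_nth)

lemma rowblk_quad:
  fixes a :: "real^'n1::finite^'n1" and U :: "real^'n1^'n1" and V :: "real^'n2::finite^'n1"
  assumes sym: "transpose a = a"
  shows "transpose (rowblk U V) ** a ** rowblk U V
       = mkblk (transpose U ** a ** U) (transpose U ** a ** V) (transpose V ** a ** V)"
proof -
  have as: "a $ i $ j = a $ j $ i" for i j using sym by (metis transpose_def vec_lambda_beta)
  show ?thesis
    apply (simp add: mkblk_eq_iff matrix_matrix_mult_def transpose_def rowblk_nth sum_distrib_right)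
    apply (intro allI)
    apply (subst sum.swap)
    apply (simp add: as mult_ac)
    done
qed

lemma M_eq:
  fixes X :: "real^('n1::finite + 'n2::finite)^('n1 + 'n2)" and ainv :: "real^'n1^'n1"
  shows "(\<chi> a b. \<Sum>k\<in>UNIV. \<Sum>l\<in>UNIV. X $ Inl k $ a * ainv $ k $ l * X $ Inl l $ b)
     = transpose (\<chi> k r. X $ Inl k $ r) ** ainv ** (\<chi> k r. X $ Inl k $ r)"
  by (simp add: vec_eq_iff matrix_matrix_mult_def transpose_def sum_distrib_right)
     (intro allI sum.swap)



definition Bc :: "real^'n::finite^'n \<Rightarrow> real^'n^'n \<Rightarrow> real \<Rightarrow> real^'n^'n" where "Bc a \<alpha> s = matrix_inv (a + s *\<^sub>R \<alpha>)"
definition B1c :: "real^'n::finite^'n \<Rightarrow> real^'n^'n \<Rightarrow> real \<Rightarrow> real^'n^'n" where "B1c a \<alpha> s = - (Bc a \<alpha> s ** \<alpha> ** Bc a \<alpha> s)"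
definition B2c :: "real^'n::finite^'n \<Rightarrow> real^'n^'n \<Rightarrow> real \<Rightarrow> real^'n^'n" where "B2c a \<alpha> s = - (Bc a \<alpha> s ** \<alpha> ** B1c a \<alpha> s + B1c a \<alpha> s ** \<alpha> ** Bc a \<alpha> s)"

definition Acur :: "real^'n1::finite^'n1 \<Rightarrow> real^'n2::finite^'n1 \<Rightarrow> real^'n2^'n2 \<Rightarrow>
   real^'n1^'n1 \<Rightarrow> real^'n2^'n1 \<Rightarrow> real^'n2^'n2 \<Rightarrow> real \<Rightarrow> real^('n1+'n2)^('n1+'n2)" where
  "Acur a b c \<alpha> \<beta> \<gamma> s = mkblk (Bc a \<alpha> s) (Bc a \<alpha> s ** (b + s *\<^sub>R \<beta>))
      ((c + s *\<^sub>R \<gamma>) + transpose (b + s *\<^sub>R \<beta>) ** Bc a \<alpha> s ** (b + s *\<^sub>R \<beta>))"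

definition Q1c :: "real^'n1::finite^'n1 \<Rightarrow> real^'n2::finite^'n1 \<Rightarrow> real^'n1^'n1 \<Rightarrow> real^'n2^'n1 \<Rightarrow> real \<Rightarrow> real^'n2^'n1" where "Q1c a b \<alpha> \<beta> s = Bc a \<alpha> s ** \<beta> + B1c a \<alpha> s ** (b + s *\<^sub>R \<beta>)"

definition A1c :: "real^'n1::finite^'n1 \<Rightarrow> real^'n2::finite^'n1 \<Rightarrow> real^'n2^'n2 \<Rightarrow>
   real^'n1^'n1 \<Rightarrow> real^'n2^'n1 \<Rightarrow> real^'n2^'n2 \<Rightarrow> real \<Rightarrow> real^('n1+'n2)^('n1+'n2)" where
  "A1c a b c \<alpha> \<beta> \<gamma> s = mkblk (B1c a \<alpha> s) (Q1c a b \<alpha> \<beta> s)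
      (\<gamma> + (transpose (b + s *\<^sub>R \<beta>) ** Bc a \<alpha> s ** \<beta> + (transpose (b + s *\<^sub>R \<beta>) ** B1c a \<alpha> s + transpose \<beta> ** Bc a \<alpha> s) ** (b + s *\<^sub>R \<beta>)))"

lemma vd_lin: "((\<lambda>s. b + s *\<^sub>R (\<beta>::'a::real_normed_vector)) has_vector_derivative \<beta>) (at t)"
  by (auto intro!: derivative_eq_intros)

lemma vd_const: "((\<lambda>s. b) has_vector_derivative 0) (at t)"
  by simp

lemma d_B: "invertible (a + t *\<^sub>R \<alpha>) \<Longrightarrow> (Bc a \<alpha> has_vector_derivative B1c a \<alpha> t) (at t)"
  unfolding Bc_def[abs_def] B1c_def by (simp add: inv_line(3))

lemma d_B1:
  assumes "invertible (a + t *\<^sub>R \<alpha>)"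
  shows "(B1c a \<alpha> has_vector_derivative B2c a \<alpha> t) (at t)"
  unfolding B1c_def[abs_def]
  apply (rule has_vector_derivative_eq_rhs)
   apply (rule has_vector_derivative_minus vd_mm d_B[OF assms] vd_const)+
  apply (simp add: B2c_def)
  done

lemma d_A:
  assumes "invertible (a + t *\<^sub>R \<alpha>)"
  shows "(Acur a b c \<alpha> \<beta> \<gamma> has_vector_derivative A1c a b c \<alpha> \<beta> \<gamma> t) (at t)"
proof -
  have "(Acur a b c \<alpha> \<beta> \<gamma> has_vector_derivative
     mkblk (B1c a \<alpha> t) (Bc a \<alpha> t ** \<beta> + B1c a \<alpha> t ** (b + t *\<^sub>R \<beta>))
      (\<gamma> + ((transpose (b + t *\<^sub>R \<beta>) ** Bc a \<alpha> t) ** \<beta> + (transpose (b + t *\<^sub>R \<beta>) ** B1c a \<alpha> t + transpose \<beta> ** Bc a \<alpha> t) ** (b + t *\<^sub>R \<beta>)))) (at t)"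
    unfolding Acur_def[abs_def]
    by (intro vd_mkblk vd_mm d_B[OF assms] vd_lin vd_tr has_vector_derivative_add)
  then show ?thesis unfolding A1c_def Q1c_def by simp
qed

lemma d_A1:
  assumes "invertible (a + t *\<^sub>R \<alpha>)"
  shows "(A1c a b c \<alpha> \<beta> \<gamma> has_vector_derivative
     mkblk (B2c a \<alpha> t) ((Bc a \<alpha> t ** 0 + B1c a \<alpha> t ** \<beta>) + (B1c a \<alpha> t ** \<beta> + B2c a \<alpha> t ** (b + t *\<^sub>R \<beta>)))
      (0 + ((transpose (b + t *\<^sub>R \<beta>) ** Bc a \<alpha> t) ** 0 + (transpose (b + t *\<^sub>R \<beta>) ** B1c a \<alpha> t + transpose \<beta> ** Bc a \<alpha> t) ** \<beta>
        + ((transpose (b + t *\<^sub>R \<beta>) ** B1c a \<alpha> t + transpose \<beta> ** Bc a \<alpha> t) ** \<beta>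
           + ((transpose (b + t *\<^sub>R \<beta>) ** B2c a \<alpha> t + transpose \<beta> ** B1c a \<alpha> t) + (transpose \<beta> ** B1c a \<alpha> t + transpose 0 ** Bc a \<alpha> t)) ** (b + t *\<^sub>R \<beta>))))) (at t)"
  unfolding A1c_def[abs_def] Q1c_def[abs_def]
  by (intro vd_mkblk vd_mm d_B[OF assms] d_B1[OF assms] vd_lin vd_tr vd_const has_vector_derivative_add)



lemma canc: "(a::real^'n::finite^'n) ** b = mat 1 \<Longrightarrow> a ** (b ** X) = X"
  by (simp add: matrix_mul_assoc)

lemma numeral_mult_mat: "numeral k * (X::real^'n::finite^'m::finite) = (numeral k::real) *\<^sub>R X"
  by (simp add: vec_eq_iff)

lemma mkblk_cong3: "P = P' \<Longrightarrow> Q = Q' \<Longrightarrow> R = R' \<Longrightarrow> mkblk P Q R = mkblk P' Q' R'"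
  by simp

lemma A2_eq:
  fixes a \<alpha> :: "real^'n1::finite^'n1" and b \<beta> :: "real^'n2::finite^'n1"
  assumes inv: "invertible (a + t *\<^sub>R \<alpha>)" and sym: "transpose (a + t *\<^sub>R \<alpha>) = a + t *\<^sub>R \<alpha>"
    and syma: "transpose \<alpha> = \<alpha>"
  shows "mkblk (B2c a \<alpha> t) ((Bc a \<alpha> t ** 0 + B1c a \<alpha> t ** \<beta>) + (B1c a \<alpha> t ** \<beta> + B2c a \<alpha> t ** (b + t *\<^sub>R \<beta>)))
      (0 + ((transpose (b + t *\<^sub>R \<beta>) ** Bc a \<alpha> t) ** 0 + (transpose (b + t *\<^sub>R \<beta>) ** B1c a \<alpha> t + transpose \<beta> ** Bc a \<alpha> t) ** \<beta>
        + ((transpose (b + t *\<^sub>R \<beta>) ** B1c a \<alpha> t + transpose \<beta> ** Bc a \<alpha> t) ** \<beta>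
           + ((transpose (b + t *\<^sub>R \<beta>) ** B2c a \<alpha> t + transpose \<beta> ** B1c a \<alpha> t) + (transpose \<beta> ** B1c a \<alpha> t + transpose 0 ** Bc a \<alpha> t)) ** (b + t *\<^sub>R \<beta>))))
    = 2 *\<^sub>R (transpose (rowblk (B1c a \<alpha> t) (Q1c a b \<alpha> \<beta> t)) ** (a + t *\<^sub>R \<alpha>) ** rowblk (B1c a \<alpha> t) (Q1c a b \<alpha> \<beta> t))"
proof -
  define A where "A = a + t *\<^sub>R \<alpha>"
  define B where "B = Bc a \<alpha> t"
  define bt where "bt = b + t *\<^sub>R \<beta>"
  have AB: "A ** B = mat 1" and BA: "B ** A = mat 1"
    using inv_props[OF inv] unfolding A_def B_def Bc_def by auto
  have symB: "transpose B = B" unfolding B_def Bc_def using inv_sym[OF inv sym] .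
  have symA: "transpose A = A" using sym unfolding A_def .
  note c1 = canc[OF AB] and c2 = canc[OF BA]
  have B1: "B1c a \<alpha> t = - (B ** (\<alpha> ** B))" unfolding B1c_def B_def by (simp add: matrix_mul_assoc)
  have B2: "B2c a \<alpha> t = - (B ** (\<alpha> ** (- (B ** (\<alpha> ** B)))) + (- (B ** (\<alpha> ** B))) ** (\<alpha> ** B))"
    unfolding B2c_def B1 B_def[symmetric] by (simp add: matrix_mul_assoc)
  have Q1: "Q1c a b \<alpha> \<beta> t = B ** \<beta> + (- (B ** (\<alpha> ** B))) ** bt"
    unfolding Q1c_def B1 B_def[symmetric] bt_def ..
  show ?thesis
    unfolding A_def[symmetric] B_def[symmetric] bt_def[symmetric] B1 B2 Q1
    unfolding rowblk_quad[OF symA] mkblk_scale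
    apply (rule mkblk_cong3)
    apply (simp_all add: mm_simps matrix_mul_assoc[symmetric] c1 c2 AB BA symB syma numeral_mult_mat)
    apply (simp_all add: scaleR_2 algebra_simps)
    done
qed



lemma lin_expand:
  fixes L :: "'v::euclidean_space \<Rightarrow> real"
  assumes "linear L"
  shows "L v = (\<Sum>b\<in>Basis. (v \<bullet> b) * L b)"
proof -
  have "L v = L (\<Sum>b\<in>Basis. (v \<bullet> b) *\<^sub>R b)" by (simp add: euclidean_representation)
  also have "\<dots> = (\<Sum>b\<in>Basis. (v \<bullet> b) * L b)"
    using assms by (simp add: linear_sum linear_scale)
  finally show ?thesis .
qed

lemma chain_real:
  fixes c :: "real \<Rightarrow> 'v::real_normed_vector"
  assumes "(\<phi> has_derivative \<phi>') (at (c t))" "(c has_vector_derivative v) (at t)"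
  shows "((\<lambda>s. \<phi> (c s)) has_real_derivative \<phi>' v) (at t)"
proof -
  have "((\<lambda>s. \<phi> (c s)) has_derivative (\<lambda>h. \<phi>' (h *\<^sub>R v))) (at t)"
    using has_derivative_compose[OF assms(2)[unfolded has_vector_derivative_def] assms(1)] .
  moreover have "(\<lambda>h. \<phi>' (h *\<^sub>R v)) = (*) (\<phi>' v)"
    using linear_scale[OF has_derivative_linear[OF assms(1)]] by (auto simp: fun_eq_iff)
  ultimately show ?thesis unfolding has_field_derivative_def by simp
qed

lemma gen_first:
  fixes c :: "real \<Rightarrow> 'v::euclidean_space"
  assumes C2: "C2_derivs f Df D2f S" and ct: "c t \<in> S" and d: "(c has_vector_derivative c1) (at t)"
  shows "((\<lambda>s. f (c s)) has_real_derivative Df (c t) c1) (at t)"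
  using C2 ct d unfolding C2_derivs_def by (auto intro: chain_real)

lemma gen_second:
  fixes c c1 :: "real \<Rightarrow> 'v::euclidean_space"
  assumes C2: "C2_derivs f Df D2f S" and ct: "c t \<in> S"
    and d1: "(c has_vector_derivative c1 t) (at t)" and d2: "(c1 has_vector_derivative c2) (at t)"
  shows "((\<lambda>s. Df (c s) (c1 s)) has_real_derivative (D2f (c t) (c1 t) (c1 t) + Df (c t) c2)) (at t)"
proof -
  have S: "open S" and Df: "\<And>z. z \<in> S \<Longrightarrow> (f has_derivative Df z) (at z)"
    and D2: "\<And>z h. z \<in> S \<Longrightarrow> ((\<lambda>w. Df w h) has_derivative D2f z h) (at z)"
    using C2 unfolding C2_derivs_def by auto
  have lin: "linear (Df z)" if "z \<in> S" for z using has_derivative_linear[OF Df[OF that]] .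
  have "(c \<longlongrightarrow> c t) (at t)" using has_vector_derivative_continuous[OF d1] by (simp add: isCont_def)
  then have evS: "\<forall>\<^sub>F s in at t. c s \<in> S" using S ct by (rule topological_tendstoD)
  define g where "g s = Df (c s) (c1 t) + (\<Sum>b\<in>Basis. ((c1 s - c1 t) \<bullet> b) * Df (c s) b)" for s
  have ev: "\<forall>\<^sub>F s in at t. Df (c s) (c1 s) = g s"
    using evS
  proof eventually_elim
    case (elim s)
    have "Df (c s) (c1 s) = Df (c s) (c1 t) + Df (c s) (c1 s - c1 t)"
      using linear_diff[OF lin[OF elim], of "c1 s" "c1 t"] by simp
    then show ?case unfolding g_def using lin_expand[OF lin[OF elim], of "c1 s - c1 t"] by simp
  qed
  have gt: "Df (c t) (c1 t) = g t" unfolding g_def by simp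
  have "(g has_real_derivative (D2f (c t) (c1 t) (c1 t) + (\<Sum>b\<in>Basis. (c2 \<bullet> b) * Df (c t) b + D2f (c t) b (c1 t) * ((c1 t - c1 t) \<bullet> b)))) (at t)"
    unfolding g_def[abs_def]
  proof (intro DERIV_add DERIV_sum DERIV_mult chain_real[OF D2[OF ct] d1])
    fix b :: 'v
    have "((\<lambda>s. c1 s - c1 t) has_vector_derivative c2) (at t)"
      using has_vector_derivative_diff[OF d2 has_vector_derivative_const] by simp
    from bounded_linear.has_vector_derivative[OF bounded_linear_inner_left this, of b]
    show "((\<lambda>s. (c1 s - c1 t) \<bullet> b) has_real_derivative c2 \<bullet> b) (at t)"
      by (simp add: has_real_derivative_iff_has_vector_derivative)
  qed
  then have "(g has_real_derivative (D2f (c t) (c1 t) (c1 t) + Df (c t) c2)) (at t)"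
    using lin_expand[OF lin[OF ct], of c2] by simp
  then show ?thesis
    using has_field_derivative_cong_eventually[OF ev gt] by simp
qed



lemma convex_second_nonneg:
  fixes \<phi> \<phi>' :: "real \<Rightarrow> real"
  assumes d: "\<delta> > 0" and cv: "convex_on {-\<delta><..<\<delta>} \<phi>"
    and d1: "\<And>s. s \<in> {-\<delta><..<\<delta>} \<Longrightarrow> (\<phi> has_real_derivative \<phi>' s) (at s)"
    and d2: "(\<phi>' has_real_derivative L) (at 0)"
  shows "L \<ge> 0"
proof (rule ccontr)
  assume "\<not> L \<ge> 0"
  then have "L < 0" by simp
  let ?A = "{-\<delta><..<\<delta>}"
  have tang: "\<phi> x - \<phi> c \<ge> \<phi>' c * (x - c)" if "c \<in> ?A" "x \<in> ?A" for c x
  proof (rule convex_on_imp_above_tangent[OF cv])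
    show "connected ?A" by simp
    show "c \<in> interior ?A" using that by (simp add: interior_open)
    show "x \<in> ?A" by fact
    show "(\<phi> has_real_derivative \<phi>' c) (at c within ?A)"
      using d1[OF that(1)] by (rule has_field_derivative_at_within)
  qed
  have mono: "\<phi>' c1 \<le> \<phi>' c2" if "c1 \<in> ?A" "c2 \<in> ?A" "c1 < c2" for c1 c2
  proof -
    have "\<phi> c2 - \<phi> c1 \<ge> \<phi>' c1 * (c2 - c1)" "\<phi> c1 - \<phi> c2 \<ge> \<phi>' c2 * (c1 - c2)"
      using tang that by auto
    then have "(\<phi>' c1 - \<phi>' c2) * (c2 - c1) \<le> 0" by (simp add: algebra_simps)
    then show ?thesis using that(3) by (simp add: mult_le_0_iff)
  qed
  obtain e where e: "e > 0" "\<And>h. h > 0 \<Longrightarrow> h < e \<Longrightarrow> \<phi>' 0 > \<phi>' (0 + h)"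
    using DERIV_neg_dec_right[OF d2 \<open>L < 0\<close>] by blast
  define h where "h = min e \<delta> / 2"
  have h: "h > 0" "h < e" "h < \<delta>" using e d unfolding h_def by auto
  have "\<phi>' 0 \<le> \<phi>' h" using mono[of 0 h] h d by auto
  moreover have "\<phi>' 0 > \<phi>' h" using e(2)[OF h(1,2)] by simp
  ultimately show False by simp
qed

lemma posdef_stable:
  fixes a \<alpha> :: "real^'n::finite^'n"
  assumes pd: "pos_def a" and syma: "transpose \<alpha> = \<alpha>"
  shows "\<exists>\<delta>>0. \<forall>s. \<bar>s\<bar> < \<delta> \<longrightarrow> pos_def (a + s *\<^sub>R \<alpha>)"
proof -
  let ?q = "\<lambda>v::real^'n. v \<bullet> (a *v v)"
  have cont: "continuous_on (sphere 0 1) ?q"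
    by (intro continuous_intros bounded_linear.continuous_on[OF matrix_vector_mul_bounded_linear])
  obtain v0 where v0: "v0 \<in> sphere 0 1" "\<And>w. w \<in> sphere 0 1 \<Longrightarrow> ?q v0 \<le> ?q w"
    using continuous_attains_inf[OF compact_sphere _ cont] by fastforce
  define m where "m = ?q v0"
  have "v0 \<noteq> 0" using v0(1) by auto
  then have m: "m > 0" using pd unfolding m_def pos_def_def by auto
  obtain K where K: "K > 0" "\<And>v. norm (\<alpha> *v v) \<le> norm v * K"
    using bounded_linear.pos_bounded[OF matrix_vector_mul_bounded_linear[of \<alpha>]] by blast
  have syma': "symmetric_mat a" using pd unfolding pos_def_def by auto
  show ?thesis
  proof (intro exI[of _ "m / K"] conjI allI impI)
    show "m / K > 0" using m K by simp
    fix s :: real assume s: "\<bar>s\<bar> < m / K"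
    have "v \<bullet> ((a + s *\<^sub>R \<alpha>) *v v) > 0" if "v \<noteq> 0" for v
    proof -
      define w where "w = (1 / norm v) *\<^sub>R v"
      have w: "w \<in> sphere 0 1" using that unfolding w_def by simp
      have qw: "?q w \<ge> m" using v0(2)[OF w] unfolding m_def .
      have "\<bar>w \<bullet> (\<alpha> *v w)\<bar> \<le> norm w * norm (\<alpha> *v w)" by (rule Cauchy_Schwarz_ineq2)
      also have "\<dots> \<le> K" using K(2)[of w] w by simp
      finally have aw: "\<bar>w \<bullet> (\<alpha> *v w)\<bar> \<le> K" .
      have "\<bar>s * (w \<bullet> (\<alpha> *v w))\<bar> \<le> \<bar>s\<bar> * K" using aw by (simp add: abs_mult mult_left_mono)
      also have "\<dots> < m" using s K(1) by (simp add: field_simps)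
      finally have pos: "w \<bullet> ((a + s *\<^sub>R \<alpha>) *v w) > 0"
        using qw by (simp add: algebra_simps scaleR_matrix_vector_assoc[symmetric])
      have v: "v = norm v *\<^sub>R w" using that unfolding w_def by simp
      have "v \<bullet> ((a + s *\<^sub>R \<alpha>) *v v) = (norm v)\<^sup>2 * (w \<bullet> ((a + s *\<^sub>R \<alpha>) *v w))"
        by (subst (1 2) v) (simp add: matrix_vector_mult_scaleR power2_eq_square)
      then show ?thesis using pos that by simp
    qed
    moreover have "symmetric_mat (a + s *\<^sub>R \<alpha>)"
      using syma syma' unfolding symmetric_mat_def by (simp add: tr_add transpose_scalar)
    ultimately show "pos_def (a + s *\<^sub>R \<alpha>)" unfolding pos_def_def by auto
  qed
qed



type_synonym ('n1,'n2) wt = "(real^'n1^'n1) \<times> (real^'n2^'n1) \<times> (real^'n2^'n2) \<times> (real^'n2) \<times> real \<times> (real^'n1)"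

definition gam :: "real^'n1::finite \<Rightarrow> real^'n2::finite \<Rightarrow> ('n1,'n2) wt \<Rightarrow> ('n1,'n2) wt \<Rightarrow> real \<Rightarrow> ('n1,'n2) pt" where
  "gam p1 x2 w d s = (case w of (a,b,c,p2,u,x1) \<Rightarrow> case d of (\<alpha>,\<beta>,\<gamma>,q,y,z) \<Rightarrow>
     (Acur a b c \<alpha> \<beta> \<gamma> s, vjoin p1 (p2 + s *\<^sub>R q), u + s * y, vjoin (x1 + s *\<^sub>R z) x2))"

definition gam1 :: "('n1::finite,'n2::finite) wt \<Rightarrow> ('n1,'n2) wt \<Rightarrow> real \<Rightarrow> ('n1,'n2) pt" where
  "gam1 w d s = (case w of (a,b,c,p2,u,x1) \<Rightarrow> case d of (\<alpha>,\<beta>,\<gamma>,q,y,z) \<Rightarrow>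
     (A1c a b c \<alpha> \<beta> \<gamma> s, vjoin 0 q, y, vjoin z 0))"

definition gam2 :: "('n1::finite,'n2::finite) wt \<Rightarrow> ('n1,'n2) wt \<Rightarrow> real \<Rightarrow> ('n1,'n2) pt" where
  "gam2 w d s = (case w of (a,b,c,p2,u,x1) \<Rightarrow> case d of (\<alpha>,\<beta>,\<gamma>,q,y,z) \<Rightarrow>
     (2 *\<^sub>R (transpose (rowblk (B1c a \<alpha> s) (Q1c a b \<alpha> \<beta> s)) ** (a + s *\<^sub>R \<alpha>) ** rowblk (B1c a \<alpha> s) (Q1c a b \<alpha> \<beta> s)), 0, 0, 0))"

lemma vjoin_lin1: "vjoin (x + s *\<^sub>R z) x2 = vjoin x x2 + s *\<^sub>R vjoin z 0"
  by (simp add: vjoin_def vec_eq_iff split_sum_all)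
lemma vjoin_lin2: "vjoin p1 (p2 + s *\<^sub>R q) = vjoin p1 p2 + s *\<^sub>R vjoin 0 q"
  by (simp add: vjoin_def vec_eq_iff split_sum_all)

lemma vd_lin_real: "((\<lambda>s. u + s * (y::real)) has_vector_derivative y) (at t)"
  using vd_lin[of u y t] by (simp add: real_scaleR_def)

lemma G1:
  assumes "invertible (a + t *\<^sub>R \<alpha>)"
  shows "(gam p1 x2 (a,b,c,p2,u,x1) (\<alpha>,\<beta>,\<gamma>,q,y,z) has_vector_derivative gam1 (a,b,c,p2,u,x1) (\<alpha>,\<beta>,\<gamma>,q,y,z) t) (at t)"
  unfolding gam_def[abs_def] gam1_def vjoin_lin1 vjoin_lin2
  by (simp, intro has_vector_derivative_Pair d_A[OF assms] vd_lin vd_lin_real)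

lemma G2:
  assumes "invertible (a + t *\<^sub>R \<alpha>)" "transpose (a + t *\<^sub>R \<alpha>) = a + t *\<^sub>R \<alpha>" "transpose \<alpha> = \<alpha>"
  shows "(gam1 (a,b,c,p2,u,x1) (\<alpha>,\<beta>,\<gamma>,q,y,z) has_vector_derivative gam2 (a,b,c,p2,u,x1) (\<alpha>,\<beta>,\<gamma>,q,y,z) t) (at t)"
  unfolding gam1_def[abs_def] gam2_def
  apply simp
  apply (intro has_vector_derivative_Pair vd_const)
  apply (rule has_vector_derivative_eq_rhs[OF d_A1[OF assms(1)]])
  apply (rule A2_eq[OF assms])
  done

lemma symm_id: "transpose A = A \<Longrightarrow> symm A = A"
  unfolding symm_def by (simp add: scaleR_2[symmetric])

lemma Acur_sym:
  assumes "pos_def (a + t *\<^sub>R \<alpha>)" "transpose c = c" "transpose \<gamma> = \<gamma>"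
  shows "transpose (Acur a b c \<alpha> \<beta> \<gamma> t) = Acur a b c \<alpha> \<beta> \<gamma> t"
proof -
  have i: "invertible (a + t *\<^sub>R \<alpha>)" by (rule posdef_invertible[OF assms(1)])
  have "transpose (Bc a \<alpha> t) = Bc a \<alpha> t" unfolding Bc_def
    using inv_sym[OF i] assms(1) unfolding pos_def_def symmetric_mat_def by auto
  then show ?thesis unfolding Acur_def transpose_mkblk using assms(2,3)
    by (simp add: mm_simps matrix_mul_assoc algebra_simps)
qed

lemma Gval:
  assumes "pos_def (a + t *\<^sub>R \<alpha>)" "transpose c = c" "transpose \<gamma> = \<gamma>"
  shows "Gtrans F p1 x2 (a + t *\<^sub>R \<alpha>, b + t *\<^sub>R \<beta>, c + t *\<^sub>R \<gamma>, p2 + t *\<^sub>R q, u + t * y, x1 + t *\<^sub>R z)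
     = sym_ext F (gam p1 x2 (a,b,c,p2,u,x1) (\<alpha>,\<beta>,\<gamma>,q,y,z) t)"
  unfolding Gtrans_def sym_ext_def gam_def
  using symm_id[OF Acur_sym[OF assms]] by (simp add: Acur_def Bc_def)

lemma A1c_sym:
  assumes "pos_def (a + t *\<^sub>R \<alpha>)" "transpose \<alpha> = \<alpha>" "transpose \<gamma> = \<gamma>"
  shows "transpose (A1c a b c \<alpha> \<beta> \<gamma> t) = A1c a b c \<alpha> \<beta> \<gamma> t"
proof -
  have i: "invertible (a + t *\<^sub>R \<alpha>)" by (rule posdef_invertible[OF assms(1)])
  have sB: "transpose (Bc a \<alpha> t) = Bc a \<alpha> t" unfolding Bc_def
    using inv_sym[OF i] assms(1) unfolding pos_def_def symmetric_mat_def by auto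
  show ?thesis unfolding A1c_def transpose_mkblk B1c_def using assms(2,3) sB
    by (simp add: mm_simps matrix_mul_assoc[symmetric] algebra_simps numeral_mult_mat)
qed

lemma Gquad:
  assumes pd: "pos_def (a + t *\<^sub>R \<alpha>)" and lin: "linear (DF (gam p1 x2 (a,b,c,p2,u,x1) (\<alpha>,\<beta>,\<gamma>,q,y,z) t))"
  shows "D2F (gam p1 x2 (a,b,c,p2,u,x1) (\<alpha>,\<beta>,\<gamma>,q,y,z) t) (gam1 (a,b,c,p2,u,x1) (\<alpha>,\<beta>,\<gamma>,q,y,z) t) (gam1 (a,b,c,p2,u,x1) (\<alpha>,\<beta>,\<gamma>,q,y,z) t)
     + DF (gam p1 x2 (a,b,c,p2,u,x1) (\<alpha>,\<beta>,\<gamma>,q,y,z) t) (gam2 (a,b,c,p2,u,x1) (\<alpha>,\<beta>,\<gamma>,q,y,z) t)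
   = quad_form DF D2F (gam p1 x2 (a,b,c,p2,u,x1) (\<alpha>,\<beta>,\<gamma>,q,y,z) t) (A1c a b c \<alpha> \<beta> \<gamma> t) q y z"
proof -
  have i: "invertible (a + t *\<^sub>R \<alpha>)" by (rule posdef_invertible[OF pd])
  have ainv: "matrix_inv (ul_block (Acur a b c \<alpha> \<beta> \<gamma> t)) = a + t *\<^sub>R \<alpha>"
    unfolding Acur_def ul_mkblk Bc_def by (rule inv_inv[OF i])
  have top: "(\<chi> k. A1c a b c \<alpha> \<beta> \<gamma> t $ Inl k) = rowblk (B1c a \<alpha> t) (Q1c a b \<alpha> \<beta> t)"
    by (simp add: A1c_def vec_eq_iff split_sum_all mkblk_nth rowblk_nth)
  let ?M = "transpose (rowblk (B1c a \<alpha> t) (Q1c a b \<alpha> \<beta> t)) ** (a + t *\<^sub>R \<alpha>) ** rowblk (B1c a \<alpha> t) (Q1c a b \<alpha> \<beta> t)"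
  have g2: "gam2 (a,b,c,p2,u,x1) (\<alpha>,\<beta>,\<gamma>,q,y,z) t = (2::real) *\<^sub>R (?M, 0, 0, 0)"
    by (simp add: gam2_def)
  have "DF (gam p1 x2 (a,b,c,p2,u,x1) (\<alpha>,\<beta>,\<gamma>,q,y,z) t) (gam2 (a,b,c,p2,u,x1) (\<alpha>,\<beta>,\<gamma>,q,y,z) t)
     = 2 * DF (gam p1 x2 (a,b,c,p2,u,x1) (\<alpha>,\<beta>,\<gamma>,q,y,z) t) (?M, 0, 0, 0)"
    unfolding g2 by (simp only: linear_scale[OF lin] real_scaleR_def)
  then show ?thesis
    unfolding quad_form_def
    by (simp add: Let_def gam_def gam1_def ainv M_eq top)
qed



lemma tuple_line:
  "((a,b,c,p2,u,x1) + s *\<^sub>R (\<alpha>,\<beta>,\<gamma>,q,y,z) :: ('n1::finite,'n2::finite) wt)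
    = (a + s *\<^sub>R \<alpha>, b + s *\<^sub>R \<beta>, c + s *\<^sub>R \<gamma>, p2 + s *\<^sub>R q, u + s * y, x1 + s *\<^sub>R z)"
  by simp

lemma comb_line:
  fixes w d :: "'a::real_vector"
  assumes "u + v = 1"
  shows "u *\<^sub>R (w + s1 *\<^sub>R d) + v *\<^sub>R (w + s2 *\<^sub>R d) = w + (u * s1 + v * s2) *\<^sub>R d"
proof -
  have "u *\<^sub>R w + v *\<^sub>R w = w" using assms by (metis scaleR_add_left scaleR_one)
  then show ?thesis by (simp add: algebra_simps)
qed

lemma posdef_comb:
  assumes "pos_def a1" "pos_def a2" "0 \<le> s" "s \<le> 1"
  shows "pos_def (a1 + s *\<^sub>R (a2 - a1))"
proof -
  have "a1 + s *\<^sub>R (a2 - a1) = (1 - s) *\<^sub>R a1 + s *\<^sub>R a2" by (simp add: algebra_simps)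
  moreover have "pos_def ((1 - s) *\<^sub>R a1 + s *\<^sub>R a2)"
  proof -
    have "v \<bullet> (((1 - s) *\<^sub>R a1 + s *\<^sub>R a2) *v v) > 0" if "v \<noteq> 0" for v
    proof -
      have p1: "v \<bullet> (a1 *v v) > 0" and p2: "v \<bullet> (a2 *v v) > 0" using assms(1,2) that unfolding pos_def_def by auto
      have "v \<bullet> (((1 - s) *\<^sub>R a1 + s *\<^sub>R a2) *v v) = (1 - s) * (v \<bullet> (a1 *v v)) + s * (v \<bullet> (a2 *v v))"
        by (simp add: matrix_vector_mult_add_rdistrib scaleR_matrix_vector_assoc[symmetric] inner_add_right)
      moreover have "(1 - s) * (v \<bullet> (a1 *v v)) + s * (v \<bullet> (a2 *v v)) > 0"
      proof (cases "s = 1")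
        case True then show ?thesis using p2 by simp
      next
        case False
        then have "(1 - s) * (v \<bullet> (a1 *v v)) > 0" using assms(4) p1 by simp
        moreover have "s * (v \<bullet> (a2 *v v)) \<ge> 0" using assms(3) p2 by simp
        ultimately show ?thesis by linarith
      qed
      ultimately show ?thesis by simp
    qed
    moreover have "symmetric_mat ((1 - s) *\<^sub>R a1 + s *\<^sub>R a2)"
      using assms(1,2) unfolding pos_def_def symmetric_mat_def by (simp add: tr_add transpose_scalar)
    ultimately show ?thesis unfolding pos_def_def by auto
  qed
  ultimately show ?thesis by simp
qed

lemma bl_vjoin1: "bounded_linear (\<lambda>x1. vjoin x1 (0::real^'n2::finite) :: real^('n1::finite + 'n2))"
  by (simp add: linear_conv_bounded_linear[symmetric] linear_iff vjoin_def vec_eq_iff split_sum_all)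

lemma vjoin_split: "vjoin x1 x2 = vjoin x1 0 + vjoin 0 x2"
  by (simp add: vjoin_def vec_eq_iff split_sum_all)

lemma open_slice: "open \<Omega> \<Longrightarrow> open {x1. vjoin x1 x2 \<in> \<Omega>}"
proof -
  assume o: "open \<Omega>"
  have e: "(\<lambda>x1. vjoin x1 x2) = (\<lambda>x1. vjoin x1 0 + vjoin 0 x2)" by (rule ext, rule vjoin_split)
  have "continuous_on UNIV (\<lambda>x1. vjoin x1 x2)"
    unfolding e by (intro continuous_intros bounded_linear.continuous_on[OF bl_vjoin1])
  then have "\<And>x. isCont (\<lambda>x1. vjoin x1 x2) x" by (simp add: continuous_on_eq_continuous_at) blast
  from continuous_open_vimage[OF o this] show ?thesis by (simp add: vimage_def)
qed

lemma norm_x1_le: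
  fixes a1 a2 :: "real^'n1::finite^'n1" and b1 b2 :: "real^'n2::finite^'n1" and c1 c2 :: "real^'n2^'n2"
    and p1 p2 :: "real^'n2" and u1 u2 :: real and x1 x2 :: "real^'n1"
  shows "norm (x1 - x2) \<le> norm ((a1,b1,c1,p1,u1,x1) - (a2,b2,c2,p2,u2,x2))"
proof -
  have "norm (x1 - x2) \<le> norm (u1 - u2, x1 - x2)" by (rule norm_snd_le)
  also have "\<dots> \<le> norm (p1 - p2, u1 - u2, x1 - x2)" by (rule norm_snd_le)
  also have "\<dots> \<le> norm (c1 - c2, p1 - p2, u1 - u2, x1 - x2)" by (rule norm_snd_le)
  also have "\<dots> \<le> norm (b1 - b2, c1 - c2, p1 - p2, u1 - u2, x1 - x2)" by (rule norm_snd_le)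
  also have "\<dots> \<le> norm (a1 - a2, b1 - b2, c1 - c2, p1 - p2, u1 - u2, x1 - x2)" by (rule norm_snd_le)
  finally show ?thesis by simp
qed



lemma phi_derivs:
  assumes C2: "C2_derivs (sym_ext F) DF D2F (UNIV \<times> UNIV \<times> UNIV \<times> \<Omega>)"
    and pd: "pos_def (a + t *\<^sub>R \<alpha>)" and sa: "transpose \<alpha> = \<alpha>" and om: "vjoin (x1 + t *\<^sub>R z) x2 \<in> \<Omega>"
  shows "((\<lambda>s. sym_ext F (gam p1 x2 (a,b,c,p2,u,x1) (\<alpha>,\<beta>,\<gamma>,q,y,z) s)) has_real_derivative
           DF (gam p1 x2 (a,b,c,p2,u,x1) (\<alpha>,\<beta>,\<gamma>,q,y,z) t) (gam1 (a,b,c,p2,u,x1) (\<alpha>,\<beta>,\<gamma>,q,y,z) t)) (at t)"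
    and "((\<lambda>s. DF (gam p1 x2 (a,b,c,p2,u,x1) (\<alpha>,\<beta>,\<gamma>,q,y,z) s) (gam1 (a,b,c,p2,u,x1) (\<alpha>,\<beta>,\<gamma>,q,y,z) s)) has_real_derivative
           quad_form DF D2F (gam p1 x2 (a,b,c,p2,u,x1) (\<alpha>,\<beta>,\<gamma>,q,y,z) t) (A1c a b c \<alpha> \<beta> \<gamma> t) q y z) (at t)"
proof -
  have inv: "invertible (a + t *\<^sub>R \<alpha>)" by (rule posdef_invertible[OF pd])
  have sym: "transpose (a + t *\<^sub>R \<alpha>) = a + t *\<^sub>R \<alpha>" using pd unfolding pos_def_def symmetric_mat_def by auto
  have mem: "gam p1 x2 (a,b,c,p2,u,x1) (\<alpha>,\<beta>,\<gamma>,q,y,z) t \<in> UNIV \<times> UNIV \<times> UNIV \<times> \<Omega>"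
    using om by (simp add: gam_def)
  show "((\<lambda>s. sym_ext F (gam p1 x2 (a,b,c,p2,u,x1) (\<alpha>,\<beta>,\<gamma>,q,y,z) s)) has_real_derivative
           DF (gam p1 x2 (a,b,c,p2,u,x1) (\<alpha>,\<beta>,\<gamma>,q,y,z) t) (gam1 (a,b,c,p2,u,x1) (\<alpha>,\<beta>,\<gamma>,q,y,z) t)) (at t)"
    by (rule gen_first[OF C2 mem G1[OF inv]])
  have lin: "linear (DF (gam p1 x2 (a,b,c,p2,u,x1) (\<alpha>,\<beta>,\<gamma>,q,y,z) t))"
  proof -
    have "(sym_ext F has_derivative DF (gam p1 x2 (a,b,c,p2,u,x1) (\<alpha>,\<beta>,\<gamma>,q,y,z) t)) (at (gam p1 x2 (a,b,c,p2,u,x1) (\<alpha>,\<beta>,\<gamma>,q,y,z) t))"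
    proof -
      from C2 have "\<forall>z\<in>UNIV \<times> UNIV \<times> UNIV \<times> \<Omega>. (sym_ext F has_derivative DF z) (at z)"
        unfolding C2_derivs_def by blast
      from bspec[OF this mem] show ?thesis .
    qed
    then show ?thesis by (rule has_derivative_linear)
  qed
  show "((\<lambda>s. DF (gam p1 x2 (a,b,c,p2,u,x1) (\<alpha>,\<beta>,\<gamma>,q,y,z) s) (gam1 (a,b,c,p2,u,x1) (\<alpha>,\<beta>,\<gamma>,q,y,z) s)) has_real_derivative
           quad_form DF D2F (gam p1 x2 (a,b,c,p2,u,x1) (\<alpha>,\<beta>,\<gamma>,q,y,z) t) (A1c a b c \<alpha> \<beta> \<gamma> t) q y z) (at t)"
  proof (rule DERIV_cong[OF gen_second[OF C2 mem G1[OF inv] G2[OF inv sym sa]]])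
    show "D2F (gam p1 x2 (a,b,c,p2,u,x1) (\<alpha>,\<beta>,\<gamma>,q,y,z) t) (gam1 (a,b,c,p2,u,x1) (\<alpha>,\<beta>,\<gamma>,q,y,z) t) (gam1 (a,b,c,p2,u,x1) (\<alpha>,\<beta>,\<gamma>,q,y,z) t)
     + DF (gam p1 x2 (a,b,c,p2,u,x1) (\<alpha>,\<beta>,\<gamma>,q,y,z) t) (gam2 (a,b,c,p2,u,x1) (\<alpha>,\<beta>,\<gamma>,q,y,z) t)
   = quad_form DF D2F (gam p1 x2 (a,b,c,p2,u,x1) (\<alpha>,\<beta>,\<gamma>,q,y,z) t) (A1c a b c \<alpha> \<beta> \<gamma> t) q y z"
      by (rule Gquad[OF pd]) (rule lin)
  qed
qed



lemma dir_rl: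
  fixes F :: "real^('n1::finite + 'n2::finite)^('n1 + 'n2) \<Rightarrow> real^('n1 + 'n2) \<Rightarrow> real
               \<Rightarrow> real^('n1 + 'n2) \<Rightarrow> real"
    and \<Omega> :: "(real^('n1 + 'n2)) set"
    and DF :: "('n1,'n2) pt \<Rightarrow> ('n1,'n2) pt \<Rightarrow> real"
    and D2F :: "('n1,'n2) pt \<Rightarrow> ('n1,'n2) pt \<Rightarrow> ('n1,'n2) pt \<Rightarrow> real"
    and p1 :: "real^'n1" and x2 :: "real^'n2"
  assumes oO: "open \<Omega>"
    and C2: "C2_derivs (sym_ext F) DF D2F (UNIV \<times> UNIV \<times> UNIV \<times> \<Omega>)"
    and H: "\<forall>A p u x. symmetric_mat A \<and> x \<in> \<Omega> \<and> pos_def (ul_block A) \<longrightarrow>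
            (\<forall>X X2 Y Z. symmetric_mat X \<longrightarrow> quad_form DF D2F (A, p, u, x) X X2 Y Z \<ge> 0)"
  shows "locally_convex_on (Gdom \<Omega> x2) (Gtrans F p1 x2)"
  unfolding locally_convex_on_def
proof
  fix w0 assume w0: "w0 \<in> Gdom \<Omega> x2"
  obtain a0 b0 c0 p20 u0 x10 where w0e: "w0 = (a0,b0,c0,p20,u0,x10)" by (cases w0) auto
  have "x10 \<in> {x1. vjoin x1 x2 \<in> \<Omega>}" using w0 unfolding w0e Gdom_def by simp
  then obtain e where e: "e > 0" "ball x10 e \<subseteq> {x1. vjoin x1 x2 \<in> \<Omega>}"
    using open_contains_ball[of "{x1. vjoin x1 x2 \<in> \<Omega>}"] open_slice[OF oO] by blast
  define S where "S = ball w0 e \<inter> Gdom \<Omega> x2"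
  have seg: "pos_def (a1 + s *\<^sub>R (a2 - a1)) \<and> vjoin (x11 + s *\<^sub>R (x12 - x11)) x2 \<in> \<Omega>
       \<and> (a1,b1,c1,p21,u1,x11) + s *\<^sub>R ((a2,b2,c2,p22,u2,x12) - (a1,b1,c1,p21,u1,x11)) \<in> S"
    if v1: "(a1,b1,c1,p21,u1,x11) \<in> S" and v2: "(a2,b2,c2,p22,u2,x12) \<in> S" and s: "0 \<le> s" "s \<le> 1"
    for a1 b1 c1 p21 u1 x11 a2 b2 c2 p22 u2 x12 and s :: real
  proof -
    let ?v1 = "(a1,b1,c1,p21,u1,x11)" and ?v2 = "(a2,b2,c2,p22,u2,x12)"
    have pd1: "pos_def a1" "symmetric_mat c1" and pd2: "pos_def a2" "symmetric_mat c2"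
      using v1 v2 unfolding S_def Gdom_def by auto
    have pd: "pos_def (a1 + s *\<^sub>R (a2 - a1))" using posdef_comb[OF pd1(1) pd2(1) s] .
    have eq: "?v1 + s *\<^sub>R (?v2 - ?v1) = (1 - s) *\<^sub>R ?v1 + s *\<^sub>R ?v2" by (simp add: algebra_simps)
    have "(1 - s) *\<^sub>R ?v1 + s *\<^sub>R ?v2 \<in> ball w0 e"
      using v1 v2 s unfolding S_def by (intro convexD[OF convex_ball]) auto
    then have inb: "?v1 + s *\<^sub>R (?v2 - ?v1) \<in> ball w0 e" using eq by simp
    have tl: "?v1 + s *\<^sub>R (?v2 - ?v1) = (a1 + s *\<^sub>R (a2 - a1), b1 + s *\<^sub>R (b2 - b1), c1 + s *\<^sub>R (c2 - c1),
        p21 + s *\<^sub>R (p22 - p21), u1 + s * (u2 - u1), x11 + s *\<^sub>R (x12 - x11))" by simp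
    have "norm ((x11 + s *\<^sub>R (x12 - x11)) - x10) \<le> norm ((?v1 + s *\<^sub>R (?v2 - ?v1)) - w0)"
      unfolding tl w0e by (rule norm_x1_le)
    also have "\<dots> < e" using inb by (simp add: dist_norm norm_minus_commute)
    finally have "x11 + s *\<^sub>R (x12 - x11) \<in> ball x10 e" by (simp add: dist_norm norm_minus_commute)
    then have om: "vjoin (x11 + s *\<^sub>R (x12 - x11)) x2 \<in> \<Omega>" using e(2) by auto
    have "symmetric_mat (c1 + s *\<^sub>R (c2 - c1))"
      using pd1(2) pd2(2) unfolding symmetric_mat_def by (simp add: tr_add tr_diff transpose_scalar)
    then have "?v1 + s *\<^sub>R (?v2 - ?v1) \<in> Gdom \<Omega> x2" unfolding tl Gdom_def using pd om by simp
    then show ?thesis using pd om inb unfolding S_def by simp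
  qed
  have convS: "convex S"
    unfolding convex_alt
  proof (intro ballI allI impI)
    fix v1 v2 and s :: real assume v1: "v1 \<in> S" and v2: "v2 \<in> S" and s: "0 \<le> s \<and> s \<le> 1"
    obtain a1 b1 c1 p21 u1 x11 where v1e: "v1 = (a1,b1,c1,p21,u1,x11)" by (cases v1) auto
    obtain a2 b2 c2 p22 u2 x12 where v2e: "v2 = (a2,b2,c2,p22,u2,x12)" by (cases v2) auto
    have "(1 - s) *\<^sub>R v1 + s *\<^sub>R v2 = v1 + s *\<^sub>R (v2 - v1)" by (simp add: algebra_simps)
    then show "(1 - s) *\<^sub>R v1 + s *\<^sub>R v2 \<in> S" using seg[of a1 b1 c1 p21 u1 x11 a2 b2 c2 p22 u2 x12 s] v1 v2 s
      unfolding v1e v2e by simp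
  qed
  have "convex_on S (Gtrans F p1 x2)"
    unfolding convex_on_def
  proof (intro conjI convS ballI allI impI)
    fix v1 v2 and u v :: real assume v1: "v1 \<in> S" and v2: "v2 \<in> S" and uv: "0 \<le> u" "0 \<le> v" "u + v = 1"
    obtain a1 b1 c1 p21 u1 x11 where v1e: "v1 = (a1,b1,c1,p21,u1,x11)" by (cases v1) auto
    obtain a2 b2 c2 p22 u2 x12 where v2e: "v2 = (a2,b2,c2,p22,u2,x12)" by (cases v2) auto
    have sc1: "transpose c1 = c1" and sc2: "transpose c2 = c2"
      using v1 v2 unfolding v1e v2e S_def Gdom_def symmetric_mat_def by auto
    have sc: "transpose (c2 - c1) = c2 - c1" using sc1 sc2 by (simp add: tr_diff)
    have sa: "transpose (a2 - a1) = a2 - a1"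
      using v1 v2 unfolding v1e v2e S_def Gdom_def pos_def_def symmetric_mat_def by (auto simp: tr_diff)
    define w where "w = (a1,b1,c1,p21,u1,x11)"
    define d where "d = (a2 - a1, b2 - b1, c2 - c1, p22 - p21, u2 - u1, x12 - x11)"
    define \<phi> where "\<phi> s = sym_ext F (gam p1 x2 w d s)" for s
    have segs: "pos_def (a1 + s *\<^sub>R (a2 - a1))" "vjoin (x11 + s *\<^sub>R (x12 - x11)) x2 \<in> \<Omega>"
      if "s \<in> {0..1}" for s
      using seg[of a1 b1 c1 p21 u1 x11 a2 b2 c2 p22 u2 x12 s] v1 v2 that unfolding v1e v2e by auto
    have val: "Gtrans F p1 x2 (a1 + s *\<^sub>R (a2 - a1), b1 + s *\<^sub>R (b2 - b1), c1 + s *\<^sub>R (c2 - c1),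
        p21 + s *\<^sub>R (p22 - p21), u1 + s * (u2 - u1), x11 + s *\<^sub>R (x12 - x11)) = \<phi> s" if "s \<in> {0..1}" for s
      unfolding \<phi>_def w_def d_def by (rule Gval[OF segs(1)[OF that] sc1 sc])
    have cvx: "convex_on {0..1} \<phi>"
    proof (rule f''_ge0_imp_convex)
      show "convex {0..(1::real)}" by simp
      fix s :: real assume s: "s \<in> {0..1}"
      show "(\<phi> has_real_derivative DF (gam p1 x2 w d s) (gam1 w d s)) (at s)"
        unfolding \<phi>_def[abs_def] w_def d_def by (rule phi_derivs(1)[OF C2 segs(1)[OF s] sa segs(2)[OF s]])
      show "((\<lambda>s. DF (gam p1 x2 w d s) (gam1 w d s)) has_real_derivative
          quad_form DF D2F (gam p1 x2 w d s) (A1c a1 b1 c1 (a2 - a1) (b2 - b1) (c2 - c1) s) (p22 - p21) (u2 - u1) (x12 - x11)) (at s)"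
        unfolding w_def d_def by (rule phi_derivs(2)[OF C2 segs(1)[OF s] sa segs(2)[OF s]])
      have pds: "pos_def (a1 + s *\<^sub>R (a2 - a1))" by (rule segs(1)[OF s])
      have "symmetric_mat (Acur a1 b1 c1 (a2 - a1) (b2 - b1) (c2 - c1) s)"
        unfolding symmetric_mat_def by (rule Acur_sym[OF pds sc1 sc])
      moreover have "pos_def (ul_block (Acur a1 b1 c1 (a2 - a1) (b2 - b1) (c2 - c1) s))"
        unfolding Acur_def ul_mkblk Bc_def by (rule posdef_inv[OF pds])
      moreover have "symmetric_mat (A1c a1 b1 c1 (a2 - a1) (b2 - b1) (c2 - c1) s)"
        unfolding symmetric_mat_def by (rule A1c_sym[OF pds sa sc])
      ultimately show "quad_form DF D2F (gam p1 x2 w d s) (A1c a1 b1 c1 (a2 - a1) (b2 - b1) (c2 - c1) s) (p22 - p21) (u2 - u1) (x12 - x11) \<ge> 0"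
        using H segs(2)[OF s] unfolding w_def d_def gam_def by auto
    qed
    have "\<phi> (u * 0 + v * 1) \<le> u * \<phi> 0 + v * \<phi> 1"
      using cvx uv unfolding convex_on_def by (metis atLeastAtMost_iff order_refl zero_le_one scaleR_conv_of_real of_real_def real_scaleR_def)
    moreover have "Gtrans F p1 x2 (u *\<^sub>R v1 + v *\<^sub>R v2) = \<phi> v"
    proof -
      have "u *\<^sub>R v1 + v *\<^sub>R v2 = (a1 + v *\<^sub>R (a2 - a1), b1 + v *\<^sub>R (b2 - b1), c1 + v *\<^sub>R (c2 - c1),
        p21 + v *\<^sub>R (p22 - p21), u1 + v * (u2 - u1), x11 + v *\<^sub>R (x12 - x11))"
      proof -
        have h: "u *\<^sub>R x + v *\<^sub>R x = x" for x :: "'z::real_vector"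
          by (metis scaleR_add_left scaleR_one uv(3))
        have h2: "r * u + r * v = r" for r :: real by (metis distrib_left mult.right_neutral uv(3))
        show ?thesis unfolding v1e v2e by (simp add: algebra_simps h h2)
      qed
      then show ?thesis using val[of v] uv by simp
    qed
    moreover have "Gtrans F p1 x2 v1 = \<phi> 0" using val[of 0] unfolding v1e by simp
    moreover have "Gtrans F p1 x2 v2 = \<phi> 1" using val[of 1] unfolding v2e by simp
    ultimately show "Gtrans F p1 x2 (u *\<^sub>R v1 + v *\<^sub>R v2) \<le> u * Gtrans F p1 x2 v1 + v * Gtrans F p1 x2 v2"
      by simp
  qed
  then show "\<exists>e>0. convex_on (ball w0 e \<inter> Gdom \<Omega> x2) (Gtrans F p1 x2)"
    using e(1) unfolding S_def by blast
qed



lemma dir_lr: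
  fixes F :: "real^('n1::finite + 'n2::finite)^('n1 + 'n2) \<Rightarrow> real^('n1 + 'n2) \<Rightarrow> real
               \<Rightarrow> real^('n1 + 'n2) \<Rightarrow> real"
    and \<Omega> :: "(real^('n1 + 'n2)) set"
    and DF :: "('n1,'n2) pt \<Rightarrow> ('n1,'n2) pt \<Rightarrow> real"
    and D2F :: "('n1,'n2) pt \<Rightarrow> ('n1,'n2) pt \<Rightarrow> ('n1,'n2) pt \<Rightarrow> real"
  assumes oO: "open \<Omega>"
    and C2: "C2_derivs (sym_ext F) DF D2F (UNIV \<times> UNIV \<times> UNIV \<times> \<Omega>)"
    and LC: "\<forall>(p1::real^'n1) (x2::real^'n2). locally_convex_on (Gdom \<Omega> x2) (Gtrans F p1 x2)"
    and sA: "symmetric_mat A" and xO: "x \<in> \<Omega>" and pdP: "pos_def (ul_block A)" and sX: "symmetric_mat X"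
  shows "quad_form DF D2F (A, p, u, x) X X2 Y Z \<ge> 0"
proof -
  define P where "P = ul_block A"
  define Qm :: "real^'n2^'n1" where "Qm = (\<chi> i j. A $ Inl i $ Inr j)"
  define R :: "real^'n2^'n2" where "R = (\<chi> i j. A $ Inr i $ Inr j)"
  define p1 :: "real^'n1" where "p1 = (\<chi> i. p $ Inl i)"
  define p2 :: "real^'n2" where "p2 = (\<chi> i. p $ Inr i)"
  define x1 :: "real^'n1" where "x1 = (\<chi> i. x $ Inl i)"
  define x2 :: "real^'n2" where "x2 = (\<chi> i. x $ Inr i)"
  define U where "U = ul_block X"
  define V :: "real^'n2^'n1" where "V = (\<chi> i j. X $ Inl i $ Inr j)"
  define W :: "real^'n2^'n2" where "W = (\<chi> i j. X $ Inr i $ Inr j)"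
  have Aij: "A $ i $ j = A $ j $ i" for i j
  proof -
    have "transpose A $ i $ j = A $ j $ i" by (simp add: transpose_def)
    then show ?thesis using sA unfolding symmetric_mat_def by simp
  qed
  have Xij: "X $ i $ j = X $ j $ i" for i j
  proof -
    have "transpose X $ i $ j = X $ j $ i" by (simp add: transpose_def)
    then show ?thesis using sX unfolding symmetric_mat_def by simp
  qed
  have Ae: "A = mkblk P Qm R" unfolding mkblk_eq_iff P_def Qm_def R_def ul_block_def using Aij by simp
  have Xe: "X = mkblk U V W" unfolding mkblk_eq_iff U_def V_def W_def ul_block_def using Xij by simp
  have pe: "vjoin p1 p2 = p" unfolding vjoin_def p1_def p2_def by (simp add: vec_eq_iff split_sum_all)
  have xe: "vjoin x1 x2 = x" unfolding vjoin_def x1_def x2_def by (simp add: vec_eq_iff split_sum_all)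
  have pdP': "pos_def P" using pdP unfolding P_def .
  have sP: "transpose P = P" using pdP' unfolding pos_def_def symmetric_mat_def by auto
  have sU: "transpose U = U" unfolding U_def ul_block_def transpose_def using Xij by (simp add: vec_eq_iff)
  have sR: "transpose R = R" unfolding R_def transpose_def using Aij by (simp add: vec_eq_iff)
  have sW: "transpose W = W" unfolding W_def transpose_def using Xij by (simp add: vec_eq_iff)
  have invP: "invertible P" by (rule posdef_invertible[OF pdP'])
  define a0 where "a0 = matrix_inv P"
  have Pa0: "P ** a0 = mat 1" and a0P: "a0 ** P = mat 1" unfolding a0_def using inv_props[OF invP] by auto
  have sa0: "transpose a0 = a0" unfolding a0_def by (rule inv_sym[OF invP sP])
  have pda0: "pos_def a0" unfolding a0_def by (rule posdef_inv[OF pdP'])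
  note c1 = canc[OF Pa0] and c2 = canc[OF a0P]
  define b0 where "b0 = a0 ** Qm"
  define c0 where "c0 = R - transpose Qm ** a0 ** Qm"
  define \<alpha> where "\<alpha> = - (a0 ** U ** a0)"
  define \<beta> where "\<beta> = a0 ** (V - U ** b0)"
  define \<gamma> where "\<gamma> = W - (transpose b0 ** P ** \<beta> + (transpose b0 ** U + transpose \<beta> ** P) ** b0)"
  have s\<alpha>: "transpose \<alpha> = \<alpha>" unfolding \<alpha>_def by (simp add: mm_simps sa0 sU matrix_mul_assoc)
  have sc0: "transpose c0 = c0" unfolding c0_def by (simp add: mm_simps sa0 sR matrix_mul_assoc)
  have s\<gamma>: "transpose \<gamma> = \<gamma>" unfolding \<gamma>_def
    by (simp add: mm_simps sP sU sW matrix_mul_assoc[symmetric] algebra_simps)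
  have B0: "Bc a0 \<alpha> 0 = P" unfolding Bc_def a0_def by (simp add: inv_inv[OF invP])
  have B10: "B1c a0 \<alpha> 0 = U" unfolding B1c_def B0 unfolding \<alpha>_def
    by (simp add: mm_simps matrix_mul_assoc[symmetric] c1 Pa0 a0P)
  have Acur0: "Acur a0 b0 c0 \<alpha> \<beta> \<gamma> 0 = A" unfolding Acur_def B0 Ae
    by (simp add: b0_def c0_def mm_simps matrix_mul_assoc[symmetric] c1 c2 sa0)
  have A10: "A1c a0 b0 c0 \<alpha> \<beta> \<gamma> 0 = X" unfolding A1c_def Q1c_def B10 B0 Xe
  proof (rule mkblk_cong3)
    show "U = U" ..
    show "P ** \<beta> + U ** (b0 + 0 *\<^sub>R \<beta>) = V"
      by (simp add: \<beta>_def mm_simps matrix_mul_assoc[symmetric] c1)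
    show "\<gamma> + (transpose (b0 + 0 *\<^sub>R \<beta>) ** P ** \<beta> + (transpose (b0 + 0 *\<^sub>R \<beta>) ** U + transpose \<beta> ** P) ** (b0 + 0 *\<^sub>R \<beta>)) = W"
      by (simp add: \<gamma>_def)
  qed
  define w0 where "w0 = (a0, b0, c0, p2, u, x1)"
  have "w0 \<in> Gdom \<Omega> x2" unfolding w0_def Gdom_def using pda0 sc0 xe xO by (simp add: symmetric_mat_def)
  then obtain e where e: "e > 0" "convex_on (ball w0 e \<inter> Gdom \<Omega> x2) (Gtrans F p1 x2)"
    using LC unfolding locally_convex_on_def by blast
  define d where "d = (\<alpha>, \<beta>, \<gamma>, X2, Y, Z)"
  obtain \<delta>1 where d1: "\<delta>1 > 0" "\<And>s. \<bar>s\<bar> < \<delta>1 \<Longrightarrow> pos_def (a0 + s *\<^sub>R \<alpha>)"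
    using posdef_stable[OF pda0 s\<alpha>] by blast
  obtain r where r: "r > 0" "ball x r \<subseteq> \<Omega>" using oO xO open_contains_ball by blast
  define \<delta> where "\<delta> = min \<delta>1 (min (r / (norm (vjoin Z (0::real^'n2)) + 1)) (e / (norm d + 1)))"
  have \<delta>: "\<delta> > 0" unfolding \<delta>_def using d1 r e by (simp add: add_nonneg_pos)
  have inS: "pos_def (a0 + s *\<^sub>R \<alpha>) \<and> vjoin (x1 + s *\<^sub>R Z) x2 \<in> \<Omega> \<and> w0 + s *\<^sub>R d \<in> ball w0 e \<inter> Gdom \<Omega> x2"
    if s: "\<bar>s\<bar> < \<delta>" for s
  proof -
    have pd: "pos_def (a0 + s *\<^sub>R \<alpha>)" using d1(2) s unfolding \<delta>_def by simp
    have "\<bar>s\<bar> * norm (vjoin Z (0::real^'n2)) < r"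
    proof -
      have "\<bar>s\<bar> < r / (norm (vjoin Z (0::real^'n2)) + 1)" using s unfolding \<delta>_def by simp
      moreover have "norm (vjoin Z (0::real^'n2)) + 1 > 0" by (simp add: add_nonneg_pos)
      ultimately have "\<bar>s\<bar> * (norm (vjoin Z (0::real^'n2)) + 1) < r" by (simp add: pos_less_divide_eq)
      then show ?thesis by (smt (verit) abs_ge_zero mult_left_mono norm_ge_zero distrib_left)
    qed
    then have "vjoin (x1 + s *\<^sub>R Z) x2 \<in> ball x r"
      unfolding vjoin_lin1 xe by (simp add: dist_norm)
    then have om: "vjoin (x1 + s *\<^sub>R Z) x2 \<in> \<Omega>" using r(2) by auto
    have "\<bar>s\<bar> * norm d < e"
    proof -
      have "\<bar>s\<bar> < e / (norm d + 1)" using s unfolding \<delta>_def by simp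
      moreover have "norm d + 1 > 0" by (simp add: add_nonneg_pos)
      ultimately have "\<bar>s\<bar> * (norm d + 1) < e" by (simp add: pos_less_divide_eq)
      then show ?thesis by (smt (verit) abs_ge_zero mult_left_mono norm_ge_zero distrib_left)
    qed
    then have b: "w0 + s *\<^sub>R d \<in> ball w0 e" by (simp add: dist_norm)
    have "symmetric_mat (c0 + s *\<^sub>R \<gamma>)" using sc0 s\<gamma> unfolding symmetric_mat_def by (simp add: tr_add transpose_scalar)
    then have "w0 + s *\<^sub>R d \<in> Gdom \<Omega> x2" unfolding w0_def d_def tuple_line Gdom_def using pd om by simp
    then show ?thesis using pd om b by simp
  qed
  define \<phi> where "\<phi> s = sym_ext F (gam p1 x2 w0 d s)" for s
  have val: "Gtrans F p1 x2 (w0 + s *\<^sub>R d) = \<phi> s" if "\<bar>s\<bar> < \<delta>" for s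
    unfolding \<phi>_def w0_def d_def tuple_line
    by (rule Gval[OF conjunct1[OF inS[OF that]] sc0 s\<gamma>])
  have cvx: "convex_on {-\<delta><..<\<delta>} \<phi>"
    unfolding convex_on_def
  proof (intro conjI ballI allI impI)
    show "convex {-\<delta><..<\<delta>}" by (rule convex_real_interval)
    fix s1 s2 and u v :: real assume s1: "s1 \<in> {-\<delta><..<\<delta>}" and s2: "s2 \<in> {-\<delta><..<\<delta>}" and uv: "0 \<le> u" "0 \<le> v" "u + v = 1"
    have "u *\<^sub>R s1 + v *\<^sub>R s2 \<in> {-\<delta><..<\<delta>}"
      using convexD[OF convex_real_interval(8) s1 s2 uv] by simp
    then have m: "\<bar>u * s1 + v * s2\<bar> < \<delta>" by auto
    have i1: "w0 + s1 *\<^sub>R d \<in> ball w0 e \<inter> Gdom \<Omega> x2" and i2: "w0 + s2 *\<^sub>R d \<in> ball w0 e \<inter> Gdom \<Omega> x2"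
      using inS s1 s2 by auto
    have "Gtrans F p1 x2 (u *\<^sub>R (w0 + s1 *\<^sub>R d) + v *\<^sub>R (w0 + s2 *\<^sub>R d))
        \<le> u * Gtrans F p1 x2 (w0 + s1 *\<^sub>R d) + v * Gtrans F p1 x2 (w0 + s2 *\<^sub>R d)"
      using e(2) i1 i2 uv unfolding convex_on_def by blast
    then show "\<phi> (u *\<^sub>R s1 + v *\<^sub>R s2) \<le> u * \<phi> s1 + v * \<phi> s2"
      using val[OF m] val[of s1] val[of s2] s1 s2 comb_line[OF uv(3), of w0 s1 d s2] by auto
  qed
  have "quad_form DF D2F (gam p1 x2 w0 d 0) (A1c a0 b0 c0 \<alpha> \<beta> \<gamma> 0) X2 Y Z \<ge> 0"
  proof (rule convex_second_nonneg[OF \<delta> cvx])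
    fix s assume s: "s \<in> {-\<delta><..<\<delta>}"
    then have "\<bar>s\<bar> < \<delta>" by auto
    from inS[OF this] show "(\<phi> has_real_derivative DF (gam p1 x2 w0 d s) (gam1 w0 d s)) (at s)"
      unfolding \<phi>_def[abs_def] w0_def d_def by (intro phi_derivs(1)[OF C2 _ s\<alpha>]) auto
  next
    have "\<bar>0::real\<bar> < \<delta>" using \<delta> by simp
    from inS[OF this] show "((\<lambda>s. DF (gam p1 x2 w0 d s) (gam1 w0 d s)) has_real_derivative
         quad_form DF D2F (gam p1 x2 w0 d 0) (A1c a0 b0 c0 \<alpha> \<beta> \<gamma> 0) X2 Y Z) (at 0)"
      unfolding w0_def d_def by (intro phi_derivs(2)[OF C2 _ s\<alpha>]) auto
  qed
  moreover have "gam p1 x2 w0 d 0 = (A, p, u, x)"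
    unfolding gam_def w0_def d_def using Acur0 pe xe by simp
  ultimately show ?thesis using A10 by simp
qed

theorem lemma3p3:
  fixes F :: "real^('n1::finite + 'n2::finite)^('n1 + 'n2) \<Rightarrow> real^('n1 + 'n2) \<Rightarrow> real
               \<Rightarrow> real^('n1 + 'n2) \<Rightarrow> real"
    and \<Omega> :: "(real^('n1 + 'n2)) set"
    and DF :: "('n1,'n2) pt \<Rightarrow> ('n1,'n2) pt \<Rightarrow> real"
    and D2F :: "('n1,'n2) pt \<Rightarrow> ('n1,'n2) pt \<Rightarrow> ('n1,'n2) pt \<Rightarrow> real"
  assumes "open \<Omega>"
    and "C2_derivs (sym_ext F) DF D2F (UNIV \<times> UNIV \<times> UNIV \<times> \<Omega>)"
  shows "(\<forall>(p1::real^'n1) (x2::real^'n2). locally_convex_on (Gdom \<Omega> x2) (Gtrans F p1 x2))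
     \<longleftrightarrow> (\<forall>A p u x. symmetric_mat A \<and> x \<in> \<Omega> \<and> pos_def (ul_block A) \<longrightarrow>
            (\<forall>X X2 Y Z. symmetric_mat X \<longrightarrow> quad_form DF D2F (A, p, u, x) X X2 Y Z \<ge> 0))"
proof
  assume L: "\<forall>(p1::real^'n1) (x2::real^'n2). locally_convex_on (Gdom \<Omega> x2) (Gtrans F p1 x2)"
  show "\<forall>A p u x. symmetric_mat A \<and> x \<in> \<Omega> \<and> pos_def (ul_block A) \<longrightarrow>
            (\<forall>X X2 Y Z. symmetric_mat X \<longrightarrow> quad_form DF D2F (A, p, u, x) X X2 Y Z \<ge> 0)"
    using dir_lr[OF assms L] by blast
next
  assume R: "\<forall>A p u x. symmetric_mat A \<and> x \<in> \<Omega> \<and> pos_def (ul_block A) \<longrightarrow>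
            (\<forall>X X2 Y Z. symmetric_mat X \<longrightarrow> quad_form DF D2F (A, p, u, x) X X2 Y Z \<ge> 0)"
  show "\<forall>(p1::real^'n1) (x2::real^'n2). locally_convex_on (Gdom \<Omega> x2) (Gtrans F p1 x2)"
    using dir_rl[OF assms R] by blast
qed

end
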